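(* Let $A$ be a real matrix with singular values $\sigma_1\ge\sigma_2\ge\cdots\ge\sigma_n\ge0$, let $p\ge1$ and $\varepsilon>0$. Suppose $w$ is a unit vector with $A^\top w\ne 0$ such that $\|A^\top w\|_2^p\ge(1+\varepsilon)\sigma_1^p-\varepsilon\|A\|_{\mathcal{S}_p}^p$, and let $v=A^\top w/\|A^\top w\|_2$. Then \[ \left\|A\left(I-vv^\top\right)\right\|_{\mathcal{S}_p}^p\le(1+\varepsilon)\min_{\|u\|_2=1}\left\|A\left(I-uu^\top\right)\right\|_{\mathcal{S}_p}^p. \]
   Context: For a matrix $M$ with singular values $\sigma_1\ge\sigma_2\ge\cdots$, $\|M\|_{\mathcal{S}_p}=\left(\sum_i\sigma_i(M)^p\right)^{1/p}$. *)

theory Defs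
  imports "Jordan_Normal_Form.Char_Poly"
begin

definition vnorm2 :: "real vec \<Rightarrow> real" where
  "vnorm2 x = sqrt (x \<bullet> x)"

definition outer :: "real vec \<Rightarrow> real mat" where
  "outer u = mat (dim_vec u) (dim_vec u) (\<lambda>(i,j). u $ i * u $ j)"

text \<open>Singular values of M (with multiplicity): square roots of the eigenvalues
  of M^T M, i.e. of the roots of its characteristic polynomial counted with
  multiplicity (M^T M is symmetric positive semidefinite, so all roots are real
  and nonnegative and there are exactly dim_col M of them).\<close>
definition singular_values :: "real mat \<Rightarrow> real multiset" where
  "singular_values M = image_mset sqrt (proots (char_poly (transpose_mat M * M)))"

definition sigma_max :: "real mat \<Rightarrow> real" where
  "sigma_max M = Max (set_mset (singular_values M))"

definition schatten_norm :: "real \<Rightarrow> real mat \<Rightarrow> real" where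
  "schatten_norm p M = (\<Sum>\<^sub># (image_mset (\<lambda>s. s powr p) (singular_values M))) powr (1 / p)"

end

theory Submission
  imports Defs "HOL-Computational_Algebra.Fundamental_Theorem_Algebra"
begin

definition orthonormal :: "nat set \<Rightarrow> nat \<Rightarrow> (nat \<Rightarrow> real vec) \<Rightarrow> bool" where
  "orthonormal I d e \<longleftrightarrow> (\<forall>i\<in>I. e i \<in> carrier_vec d) \<and>
     (\<forall>i\<in>I. \<forall>j\<in>I. e i \<bullet> e j = (if i = j then 1 else 0))"

lemma bessel_sums:
  fixes e :: "nat \<Rightarrow> nat \<Rightarrow> real" and x :: "nat \<Rightarrow> real"
  assumes fin: "finite I"
    and on: "\<And>i j. i \<in> I \<Longrightarrow> j \<in> I \<Longrightarrow> (\<Sum>l<d. e i l * e j l) = (if i = j then 1 else 0)"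
  shows "(\<Sum>i\<in>I. (\<Sum>l<d. e i l * x l)^2) \<le> (\<Sum>l<d. (x l)^2)"
proof -
  define c where "c i = (\<Sum>l<d. e i l * x l)" for i
  define S where "S l = (\<Sum>i\<in>I. c i * e i l)" for l
  have 1: "(\<Sum>l<d. x l * S l) = (\<Sum>i\<in>I. (c i)^2)"
  proof -
    have "(\<Sum>l<d. x l * S l) = (\<Sum>l<d. \<Sum>i\<in>I. c i * (e i l * x l))"
      unfolding S_def by (simp add: sum_distrib_left mult_ac)
    also have "\<dots> = (\<Sum>i\<in>I. \<Sum>l<d. c i * (e i l * x l))" by (rule sum.swap)
    also have "\<dots> = (\<Sum>i\<in>I. (c i)^2)"
      by (simp add: sum_distrib_left[symmetric] c_def power2_eq_square)
    finally show ?thesis .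
  qed
  have 2: "(\<Sum>l<d. (S l)^2) = (\<Sum>i\<in>I. (c i)^2)"
  proof -
    have "(\<Sum>l<d. (S l)^2) = (\<Sum>l<d. \<Sum>i\<in>I. \<Sum>j\<in>I. c i * c j * (e i l * e j l))"
      unfolding S_def power2_eq_square sum_product by (simp add: mult_ac)
    also have "\<dots> = (\<Sum>i\<in>I. \<Sum>j\<in>I. \<Sum>l<d. c i * c j * (e i l * e j l))"
      by (simp add: sum.swap[of _ "{..<d}"] sum.swap[of _ "{..<d}" I])
    also have "\<dots> = (\<Sum>i\<in>I. \<Sum>j\<in>I. c i * c j * (if i = j then 1 else 0))"
      by (simp add: sum_distrib_left[symmetric] on)
    also have "\<dots> = (\<Sum>i\<in>I. (c i)^2)"
      using fin by (simp add: power2_eq_square if_distrib sum.delta cong: if_cong)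
    finally show ?thesis .
  qed
  have "0 \<le> (\<Sum>l<d. (x l - S l)^2)" by (simp add: sum_nonneg)
  also have "\<dots> = (\<Sum>l<d. (x l)^2) - 2 * (\<Sum>l<d. x l * S l) + (\<Sum>l<d. (S l)^2)"
    by (simp add: power2_diff sum.distrib sum_subtractf sum_distrib_left mult_ac)
  finally show ?thesis using 1 2 by (simp add: c_def)
qed

lemma bessel:
  assumes fin: "finite I" and on: "orthonormal I d e" and x: "x \<in> carrier_vec d"
  shows "(\<Sum>i\<in>I. (e i \<bullet> x)^2) \<le> x \<bullet> x"
proof -
  have ed: "\<And>i. i \<in> I \<Longrightarrow> dim_vec (e i) = d" using on unfolding orthonormal_def by auto
  have "(\<Sum>i\<in>I. (\<Sum>l<d. e i $ l * x $ l)^2) \<le> (\<Sum>l<d. (x $ l)^2)"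
    apply (rule bessel_sums[OF fin])
    using on ed unfolding orthonormal_def scalar_prod_def by (auto simp: atLeast0LessThan)
  moreover have "(\<Sum>i\<in>I. (e i \<bullet> x)^2) = (\<Sum>i\<in>I. (\<Sum>l<d. e i $ l * x $ l)^2)"
    using x by (simp add: scalar_prod_def atLeast0LessThan)
  moreover have "x \<bullet> x = (\<Sum>l<d. (x $ l)^2)"
    using x by (simp add: scalar_prod_def atLeast0LessThan power2_eq_square)
  ultimately show ?thesis by simp
qed

lemma onb_rows:
  assumes on: "orthonormal {..<n} n ys" and l: "l < n" and k: "k < n"
  shows "(\<Sum>j<n. ys j $ l * ys j $ k) = (if l = k then 1 else 0)"
proof -
  define Y where "Y = mat n n (\<lambda>(l,j). ys j $ l)"
  have Y: "Y \<in> carrier_mat n n" unfolding Y_def by simp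
  have dims: "\<And>j. j < n \<Longrightarrow> dim_vec (ys j) = n" using on unfolding orthonormal_def by auto
  have "transpose_mat Y * Y = 1\<^sub>m n"
  proof (rule eq_matI)
    fix i j assume i: "i < dim_row (1\<^sub>m n :: real mat)" and j: "j < dim_col (1\<^sub>m n :: real mat)"
    have "(transpose_mat Y * Y) $$ (i,j) = (\<Sum>l<n. ys i $ l * ys j $ l)"
      using i j unfolding Y_def by (simp add: scalar_prod_def atLeast0LessThan)
    also have "\<dots> = ys i \<bullet> ys j" using dims j by (simp add: scalar_prod_def atLeast0LessThan)
    also have "\<dots> = (1\<^sub>m n :: real mat) $$ (i,j)" using on i j unfolding orthonormal_def by auto
    finally show "(transpose_mat Y * Y) $$ (i,j) = (1\<^sub>m n :: real mat) $$ (i,j)" .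
  qed (use Y in auto)
  from mat_mult_left_right_inverse[OF _ Y this] Y
  have "Y * transpose_mat Y = 1\<^sub>m n" by auto
  hence "(Y * transpose_mat Y) $$ (l,k) = (1\<^sub>m n :: real mat) $$ (l,k)" by simp
  thus ?thesis using l k unfolding Y_def by (simp add: scalar_prod_def atLeast0LessThan)
qed

lemma onb_expand:
  assumes on: "orthonormal {..<n} n ys" and x: "x \<in> carrier_vec n" and l: "l < n"
  shows "(\<Sum>j<n. (ys j \<bullet> x) * ys j $ l) = x $ l"
proof -
  have dims: "\<And>j. j < n \<Longrightarrow> dim_vec (ys j) = n" using on unfolding orthonormal_def by auto
  have "(\<Sum>j<n. (ys j \<bullet> x) * ys j $ l) = (\<Sum>j<n. \<Sum>k<n. ys j $ k * x $ k * ys j $ l)"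
    using x by (simp add: scalar_prod_def atLeast0LessThan sum_distrib_right)
  also have "\<dots> = (\<Sum>k<n. \<Sum>j<n. ys j $ k * x $ k * ys j $ l)" by (rule sum.swap)
  also have "\<dots> = (\<Sum>k<n. x $ k * (\<Sum>j<n. ys j $ l * ys j $ k))"
    by (intro sum.cong refl, subst sum_distrib_left, intro sum.cong refl, simp)
  also have "\<dots> = (\<Sum>k<n. x $ k * (if l = k then 1 else 0))"
    by (intro sum.cong refl, simp add: onb_rows[OF on l])
  also have "\<dots> = x $ l" using l by (simp add: if_distrib cong: if_cong)
  finally show ?thesis .
qed

lemma parseval:
  assumes on: "orthonormal {..<n} n ys" and a: "a \<in> carrier_vec n" and b: "b \<in> carrier_vec n"
  shows "a \<bullet> b = (\<Sum>j<n. (ys j \<bullet> a) * (ys j \<bullet> b))"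
proof -
  have dims: "\<And>j. j < n \<Longrightarrow> dim_vec (ys j) = n" using on unfolding orthonormal_def by auto
  have "a \<bullet> b = (\<Sum>l<n. a $ l * b $ l)"
    using b by (simp add: scalar_prod_def atLeast0LessThan)
  also have "\<dots> = (\<Sum>l<n. a $ l * (\<Sum>j<n. (ys j \<bullet> b) * ys j $ l))"
    by (rule sum.cong, simp, simp add: onb_expand[OF on b])
  also have "\<dots> = (\<Sum>l<n. \<Sum>j<n. (ys j \<bullet> b) * (ys j $ l * a $ l))"
    by (intro sum.cong refl, subst sum_distrib_left, intro sum.cong refl, simp)
  also have "\<dots> = (\<Sum>j<n. \<Sum>l<n. (ys j \<bullet> b) * (ys j $ l * a $ l))" by (rule sum.swap)
  also have "\<dots> = (\<Sum>j<n. (ys j \<bullet> b) * (ys j \<bullet> a))"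
    using a by (intro sum.cong refl, simp add: sum_distrib_left[symmetric] scalar_prod_def atLeast0LessThan)
  also have "\<dots> = (\<Sum>j<n. (ys j \<bullet> a) * (ys j \<bullet> b))" by (simp add: mult.commute)
  finally show ?thesis .
qed

lemma complex_eigen_exists:
  fixes C :: "real mat"
  assumes C: "C \<in> carrier_mat r r" and r: "r > 0"
  shows "\<exists>z v. v \<in> carrier_vec r \<and> v \<noteq> 0\<^sub>v r \<and> map_mat complex_of_real C *\<^sub>v v = z \<cdot>\<^sub>v v"
proof -
  let ?Cc = "map_mat complex_of_real C"
  have Cc: "?Cc \<in> carrier_mat r r" using C by simp
  have "degree (char_poly ?Cc) = r" using degree_monic_char_poly[OF Cc] by simp
  hence "\<not> constant (poly (char_poly ?Cc))" using r by (simp add: constant_degree)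
  then obtain z where "poly (char_poly ?Cc) z = 0" using fundamental_theorem_of_algebra by blast
  hence "eigenvalue ?Cc z" using eigenvalue_root_char_poly[OF Cc] by simp
  then obtain v where "eigenvector ?Cc v z" unfolding eigenvalue_def by blast
  thus ?thesis unfolding eigenvector_def using Cc by auto
qed

lemma real_eigen_exists:
  fixes C :: "real mat"
  assumes C: "C \<in> carrier_mat r r" and r: "r > 0" and sym: "\<And>i j. i < r \<Longrightarrow> j < r \<Longrightarrow> C $$ (i,j) = C $$ (j,i)"
  shows "\<exists>mu x. x \<in> carrier_vec r \<and> x \<noteq> 0\<^sub>v r \<and> C *\<^sub>v x = mu \<cdot>\<^sub>v x"
proof -
  let ?Cc = "map_mat complex_of_real C"
  obtain z v where v: "v \<in> carrier_vec r" and v0: "v \<noteq> 0\<^sub>v r" and ev: "?Cc *\<^sub>v v = z \<cdot>\<^sub>v v"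
    using complex_eigen_exists[OF C r] by blast
  have evi: "(\<Sum>j<r. complex_of_real (C $$ (i,j)) * v $ j) = z * v $ i" if i: "i < r" for i
  proof -
    have "(?Cc *\<^sub>v v) $ i = (z \<cdot>\<^sub>v v) $ i" using ev by simp
    thus ?thesis using i C v by (simp add: scalar_prod_def atLeast0LessThan)
  qed
  define s where "s = (\<Sum>i<r. \<Sum>j<r. cnj (v $ i) * complex_of_real (C $$ (i,j)) * v $ j)"
  define N where "N = (\<Sum>i<r. (cmod (v $ i))^2)"
  have s1: "s = z * complex_of_real N"
  proof -
    have "s = (\<Sum>i<r. cnj (v $ i) * (\<Sum>j<r. complex_of_real (C $$ (i,j)) * v $ j))"
      unfolding s_def by (simp add: sum_distrib_left mult.assoc)
    also have "\<dots> = (\<Sum>i<r. cnj (v $ i) * (z * v $ i))" by (simp add: evi)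
    also have "\<dots> = z * (\<Sum>i<r. cnj (v $ i) * v $ i)" by (simp add: sum_distrib_left mult_ac)
    also have "(\<Sum>i<r. cnj (v $ i) * v $ i) = complex_of_real N"
    proof -
      have cn: "cnj a * a = complex_of_real ((cmod a)^2)" for a
        by (metis complex_norm_square mult.commute)
      show ?thesis unfolding N_def of_real_sum by (intro sum.cong refl) (rule cn)
    qed
    finally show ?thesis .
  qed
  have s2: "cnj s = s"
  proof -
    have "cnj s = (\<Sum>i<r. \<Sum>j<r. v $ i * complex_of_real (C $$ (i,j)) * cnj (v $ j))"
      unfolding s_def by simp
    also have "\<dots> = (\<Sum>j<r. \<Sum>i<r. v $ i * complex_of_real (C $$ (i,j)) * cnj (v $ j))"
      by (rule sum.swap)
    also have "\<dots> = s" unfolding s_def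
      by (intro sum.cong refl, simp add: sym mult_ac)
    finally show ?thesis .
  qed
  have "\<exists>i<r. v $ i \<noteq> 0"
  proof (rule ccontr)
    assume "\<not> ?thesis"
    hence "v = 0\<^sub>v r" using v by (intro eq_vecI) auto
    with v0 show False by simp
  qed
  then obtain i0 where i0: "i0 < r" "v $ i0 \<noteq> 0" by blast
  have Npos: "N > 0" unfolding N_def
    by (rule sum_pos2[of _ i0]) (use i0 in auto)
  have "Im s = 0" using arg_cong[OF s2, of Im] by simp
  hence "Im z * N = 0" using s1 by simp
  hence Imz: "Im z = 0" using Npos by simp
  define mu where "mu = Re z"
  have zmu: "z = complex_of_real mu" using Imz unfolding mu_def by (simp add: complex_eq_iff)
  define x where "x = vec r (\<lambda>i. Re (v $ i))"
  define y where "y = vec r (\<lambda>i. Im (v $ i))"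
  have Cx: "C *\<^sub>v x = mu \<cdot>\<^sub>v x"
  proof (rule eq_vecI)
    fix i assume "i < dim_vec (mu \<cdot>\<^sub>v x)"
    hence i: "i < r" unfolding x_def by simp
    have "(C *\<^sub>v x) $ i = (\<Sum>j<r. C $$ (i,j) * Re (v $ j))"
      using C i unfolding x_def by (simp add: scalar_prod_def atLeast0LessThan)
    also have "\<dots> = Re (\<Sum>j<r. complex_of_real (C $$ (i,j)) * v $ j)" by (simp add: Re_sum)
    also have "\<dots> = mu * Re (v $ i)" using evi[OF i] zmu by simp
    finally show "(C *\<^sub>v x) $ i = (mu \<cdot>\<^sub>v x) $ i" using i unfolding x_def by simp
  qed (use C in \<open>auto simp: x_def\<close>)
  have Cy: "C *\<^sub>v y = mu \<cdot>\<^sub>v y"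
  proof (rule eq_vecI)
    fix i assume "i < dim_vec (mu \<cdot>\<^sub>v y)"
    hence i: "i < r" unfolding y_def by simp
    have "(C *\<^sub>v y) $ i = (\<Sum>j<r. C $$ (i,j) * Im (v $ j))"
      using C i unfolding y_def by (simp add: scalar_prod_def atLeast0LessThan)
    also have "\<dots> = Im (\<Sum>j<r. complex_of_real (C $$ (i,j)) * v $ j)" by (simp add: Im_sum)
    also have "\<dots> = mu * Im (v $ i)" using evi[OF i] zmu by simp
    finally show "(C *\<^sub>v y) $ i = (mu \<cdot>\<^sub>v y) $ i" using i unfolding y_def by simp
  qed (use C in \<open>auto simp: y_def\<close>)
  show ?thesis
  proof (cases "x = 0\<^sub>v r")
    case False thus ?thesis using Cx by (intro exI[of _ mu] exI[of _ x]) (auto simp: x_def)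
  next
    case True
    hence "Re (v $ i0) = 0" using i0 unfolding x_def by (metis index_vec index_zero_vec(1))
    hence "Im (v $ i0) \<noteq> 0" using i0 by (simp add: complex_eq_iff)
    hence "y \<noteq> 0\<^sub>v r" using i0 unfolding y_def by (metis index_vec index_zero_vec(1))
    thus ?thesis using Cy by (intro exI[of _ mu] exI[of _ y]) (auto simp: y_def)
  qed
qed

lemma householder:
  fixes y :: "real vec"
  assumes y: "y \<in> carrier_vec N" and yy: "y \<bullet> y = 1" and N: "0 < N"
  shows "\<exists>Q \<in> carrier_mat N N. (\<forall>i<N. \<forall>j<N. Q $$ (i,j) = Q $$ (j,i)) \<and> Q * Q = 1\<^sub>m N
          \<and> (\<forall>i<N. Q $$ (i,0) = y $ i)"
proof -
  define h where "h = vec N (\<lambda>i. y $ i - (if i = 0 then 1 else 0))"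
  define hh where "hh = (\<Sum>k<N. (h $ k)^2)"
  have yy': "(\<Sum>k<N. (y $ k)^2) = 1" using yy y by (simp add: scalar_prod_def atLeast0LessThan power2_eq_square)
  have hh_eq: "hh = 2 - 2 * y $ 0"
  proof -
    have "hh = (\<Sum>k<N. (y $ k)^2 - 2 * (if k = 0 then y $ k else 0) + (if k = 0 then 1 else 0))"
      unfolding hh_def h_def by (intro sum.cong refl) (auto simp: power2_eq_square algebra_simps)
    also have "\<dots> = (\<Sum>k<N. (y $ k)^2) - 2 * y $ 0 + 1"
      using N by (simp add: sum.distrib sum_subtractf sum_distrib_left[symmetric])
    finally show ?thesis using yy' by simp
  qed
  show ?thesis
  proof (cases "hh = 0")
    case True
    have "h $ k = 0" if k: "k < N" for k
    proof -
      have "(\<Sum>k<N. (h $ k)^2) = 0" using True hh_def by simp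
      hence "\<forall>k\<in>{..<N}. (h $ k)^2 = 0" by (subst (asm) sum_nonneg_eq_0_iff) auto
      thus ?thesis using k by simp
    qed
    hence yk: "y $ k = (if k = 0 then 1 else 0)" if "k < N" for k using that unfolding h_def by fastforce
    show ?thesis
      by (rule bexI[of _ "1\<^sub>m N"]) (auto simp: yk)
  next
    case False
    define Q where "Q = mat N N (\<lambda>(i,j). (if i = j then 1 else 0) - 2 * h $ i * h $ j / hh)"
    have Q: "Q \<in> carrier_mat N N" unfolding Q_def by simp
    have sym: "\<forall>i<N. \<forall>j<N. Q $$ (i,j) = Q $$ (j,i)" unfolding Q_def by (auto simp: mult_ac)
    have QQ: "Q * Q = 1\<^sub>m N"
    proof (rule eq_matI)
      fix i j assume i: "i < dim_row (1\<^sub>m N :: real mat)" and j: "j < dim_col (1\<^sub>m N :: real mat)"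
      hence i: "i < N" and j: "j < N" by auto
      have "(Q * Q) $$ (i,j) = (\<Sum>k<N. ((if i = k then 1 else 0) - 2 * h $ i * h $ k / hh) *
                                     ((if k = j then 1 else 0) - 2 * h $ k * h $ j / hh))"
        using i j Q unfolding Q_def by (simp add: scalar_prod_def atLeast0LessThan)
      also have "\<dots> = (\<Sum>k<N. (if k = i then (if k = j then 1 else 0) else 0)
            - (if k = i then 2 * h $ k * h $ j / hh else 0)
            - (if k = j then 2 * h $ i * h $ k / hh else 0)
            + (4 * h $ i * h $ j / (hh * hh)) * (h $ k)^2)"
        by (intro sum.cong refl) (auto simp: algebra_simps power2_eq_square)
      also have "\<dots> = (\<Sum>k<N. (if k = i then (if k = j then 1 else 0) else 0))
            - (\<Sum>k<N. if k = i then 2 * h $ k * h $ j / hh else 0)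
            - (\<Sum>k<N. if k = j then 2 * h $ i * h $ k / hh else 0)
            + (4 * h $ i * h $ j / (hh * hh)) * (\<Sum>k<N. (h $ k)^2)"
        by (simp add: sum.distrib sum_subtractf sum_distrib_left)
      also have "\<dots> = (if i = j then 1 else 0) - 2 * h $ i * h $ j / hh - 2 * h $ i * h $ j / hh
            + (4 * h $ i * h $ j / (hh * hh)) * hh"
        using i j unfolding hh_def[symmetric] by simp
      also have "\<dots> = (if i = j then 1 else 0)" using False by (simp add: field_simps)
      finally show "(Q * Q) $$ (i,j) = (1\<^sub>m N :: real mat) $$ (i,j)" using i j by simp
    qed (use Q in auto)
    have col0: "\<forall>i<N. Q $$ (i,0) = y $ i"
    proof (intro allI impI)
      fix i assume i: "i < N"
      have h0: "h $ 0 = y $ 0 - 1" using N unfolding h_def by simp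
      have "Q $$ (i,0) = (if i = 0 then 1 else 0) - 2 * h $ i * h $ 0 / hh"
        using i N unfolding Q_def by simp
      also have "\<dots> = (if i = 0 then 1 else 0) + h $ i"
        using False unfolding hh_eq h0 by (simp add: field_simps)
      also have "\<dots> = y $ i" using i unfolding h_def by simp
      finally show "Q $$ (i,0) = y $ i" .
    qed
    show ?thesis using Q sym QQ col0 by blast
  qed
qed

definition eigsys :: "real mat \<Rightarrow> nat \<Rightarrow> (nat \<Rightarrow> real vec) \<Rightarrow> (nat \<Rightarrow> real) \<Rightarrow> bool" where
  "eigsys G n ys lams \<longleftrightarrow> orthonormal {..<n} n ys \<and> (\<forall>j<n. G *\<^sub>v ys j = lams j \<cdot>\<^sub>v ys j)"

definition symm :: "real mat \<Rightarrow> nat \<Rightarrow> bool" where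
  "symm G n \<longleftrightarrow> (\<forall>i<n. \<forall>j<n. G $$ (i,j) = G $$ (j,i))"

lemma sp_pos: assumes x: "(x :: real vec) \<in> carrier_vec n" and x0: "x \<noteq> 0\<^sub>v n"
  shows "x \<bullet> x > 0"
proof -
  have "\<exists>i<n. x $ i \<noteq> 0"
  proof (rule ccontr)
    assume "\<not> ?thesis"
    hence "x = 0\<^sub>v n" using x by (intro eq_vecI) auto
    with x0 show False by simp
  qed
  then obtain i0 where i0: "i0 < n" "x $ i0 \<noteq> 0" by blast
  have "x \<bullet> x = (\<Sum>l<n. (x $ l)^2)" using x by (simp add: scalar_prod_def atLeast0LessThan power2_eq_square)
  also have "\<dots> > 0" by (rule sum_pos2[of _ i0]) (use i0 in auto)
  finally show ?thesis .
qed

lemma sp_Suc: assumes "a \<in> carrier_vec (Suc n)" "b \<in> carrier_vec (Suc n)"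
  shows "a \<bullet> b = a $ 0 * b $ 0 + (\<Sum>l<n. a $ (Suc l) * b $ (Suc l))"
  using assms unfolding scalar_prod_def atLeast0LessThan
  by (simp del: sum.lessThan_Suc add: sum.lessThan_Suc_shift)

lemma symm_transpose: "G \<in> carrier_mat n n \<Longrightarrow> symm G n \<longleftrightarrow> transpose_mat G = G"
  unfolding symm_def by (auto intro!: eq_matI simp: mat_eq_iff)

lemma orth_mult:
  fixes Q :: "real mat"
  assumes Q: "Q \<in> carrier_mat N N" and QT: "transpose_mat Q = Q" and QQ: "Q * Q = 1\<^sub>m N"
    and a: "a \<in> carrier_vec N" and b: "b \<in> carrier_vec N"
  shows "(Q *\<^sub>v a) \<bullet> (Q *\<^sub>v b) = a \<bullet> b"
proof -
  have "(Q *\<^sub>v a) \<bullet> (Q *\<^sub>v b) = (transpose_mat Q *\<^sub>v (Q *\<^sub>v a)) \<bullet> b"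
    using transpose_vec_mult_scalar[OF Q b, of "Q *\<^sub>v a"] Q a by simp
  also have "transpose_mat Q *\<^sub>v (Q *\<^sub>v a) = a" using QT QQ Q a
    by (metis assoc_mult_mat_vec one_mult_mat_vec)
  finally show ?thesis .
qed

theorem spectral:
  "G \<in> carrier_mat n n \<Longrightarrow> symm G n \<Longrightarrow> \<exists>ys lams. eigsys G n ys lams"
proof (induction n arbitrary: G)
  case 0
  show ?case by (auto simp: eigsys_def orthonormal_def)
next
  case (Suc n)
  have G: "G \<in> carrier_mat (Suc n) (Suc n)" by fact
  have GT: "transpose_mat G = G" using Suc.prems symm_transpose by blast
  obtain mu x where x: "x \<in> carrier_vec (Suc n)" and x0: "x \<noteq> 0\<^sub>v (Suc n)" and Gx: "G *\<^sub>v x = mu \<cdot>\<^sub>v x"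
    using real_eigen_exists[OF G] Suc.prems(2) unfolding symm_def by blast
  have xx: "x \<bullet> x > 0" by (rule sp_pos[OF x x0])
  define y where "y = (1 / sqrt (x \<bullet> x)) \<cdot>\<^sub>v x"
  have y: "y \<in> carrier_vec (Suc n)" using x unfolding y_def by simp
  have yy: "y \<bullet> y = 1" using x xx unfolding y_def
    by (simp add: power2_eq_square[symmetric])
  have Gy: "G *\<^sub>v y = mu \<cdot>\<^sub>v y" unfolding y_def using mult_mat_vec[OF G x] Gx
    by (simp add: smult_smult_assoc mult.commute)
  obtain Q where Q: "Q \<in> carrier_mat (Suc n) (Suc n)" and Qsym: "\<forall>i<Suc n. \<forall>j<Suc n. Q $$ (i,j) = Q $$ (j,i)"
    and QQ: "Q * Q = 1\<^sub>m (Suc n)" and Qcol: "\<forall>i<Suc n. Q $$ (i,0) = y $ i"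
    using householder[OF y yy] by blast
  have QT: "transpose_mat Q = Q" using Q Qsym symm_transpose unfolding symm_def by blast
  have colQ: "col Q 0 = y" using Q y Qcol by (intro eq_vecI) auto
  define G1 where "G1 = Q * G * Q"
  have G1: "G1 \<in> carrier_mat (Suc n) (Suc n)" unfolding G1_def using Q G by simp
  have G1T: "transpose_mat G1 = G1"
  proof -
    have GQ: "G * Q \<in> carrier_mat (Suc n) (Suc n)" using G Q by simp
    have "transpose_mat G1 = transpose_mat (Q * (G * Q))" unfolding G1_def using Q G by simp
    also have "\<dots> = transpose_mat (G * Q) * transpose_mat Q" by (rule transpose_mult[OF Q GQ])
    also have "transpose_mat (G * Q) = transpose_mat Q * transpose_mat G" by (rule transpose_mult[OF G Q])
    finally show ?thesis unfolding G1_def QT GT using Q G by simp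
  qed
  have G1col: "G1 $$ (i,0) = (if i = 0 then mu else 0)" if i: "i < Suc n" for i
  proof -
    have e1: "(Q * G * Q) $$ (i,0) = row (Q * G) i \<bullet> col Q 0"
      by (rule index_mult_mat(1)) (use i Q G in auto)
    have e2: "((Q * G) *\<^sub>v y) $ i = row (Q * G) i \<bullet> y"
      by (rule index_mult_mat_vec) (use i Q G in auto)
    have "G1 $$ (i,0) = ((Q * G) *\<^sub>v y) $ i" unfolding G1_def e1 e2 colQ by (rule refl)
    also have "\<dots> = (Q *\<^sub>v (mu \<cdot>\<^sub>v y)) $ i" using Q G y Gy by simp
    also have "\<dots> = mu * (row Q i \<bullet> col Q 0)" using Q y i mult_mat_vec[OF Q y] colQ by simp
    also have "row Q i \<bullet> col Q 0 = (Q * Q) $$ (i,0)" using Q i by simp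
    also have "\<dots> = (if i = 0 then 1 else 0)" using QQ i by simp
    finally show ?thesis by simp
  qed
  have G1row: "G1 $$ (0,j) = (if j = 0 then mu else 0)" if j: "j < Suc n" for j
  proof -
    have "G1 $$ (0,j) = transpose_mat G1 $$ (j,0)" using G1 j by simp
    thus ?thesis using G1T G1col[OF j] by simp
  qed
  define G' where "G' = mat n n (\<lambda>(i,j). G1 $$ (Suc i, Suc j))"
  have G': "G' \<in> carrier_mat n n" unfolding G'_def by simp
  have "symm G' n" unfolding symm_def G'_def using G1T G1
    by (auto simp: mat_eq_iff)
  from Suc.IH[OF G' this] obtain ys' lams' where es': "eigsys G' n ys' lams'" by blast
  have ys'c: "\<And>j. j < n \<Longrightarrow> ys' j \<in> carrier_vec n" and ys'o: "\<And>i j. i < n \<Longrightarrow> j < n \<Longrightarrow> ys' i \<bullet> ys' j = (if i = j then 1 else 0)"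
    and ys'e: "\<And>j. j < n \<Longrightarrow> G' *\<^sub>v ys' j = lams' j \<cdot>\<^sub>v ys' j"
    using es' unfolding eigsys_def orthonormal_def by auto
  define z where "z k = (if k = 0 then unit_vec (Suc n) 0 else vec (Suc n) (\<lambda>l. if l = 0 then 0 else ys' (k - 1) $ (l - 1)))" for k
  define lz where "lz k = (if k = 0 then mu else lams' (k - 1))" for k
  have zc: "z k \<in> carrier_vec (Suc n)" for k unfolding z_def by simp
  have zd[simp]: "dim_vec (z k) = Suc n" for k unfolding z_def by simp
  have z0: "z k $ 0 = (if k = 0 then 1 else 0)" for k unfolding z_def by simp
  have zS: "k < Suc n \<Longrightarrow> l < n \<Longrightarrow> z k $ (Suc l) = (if k = 0 then 0 else ys' (k - 1) $ l)" for k l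
    unfolding z_def by simp
  have zo: "orthonormal {..<Suc n} (Suc n) z"
    unfolding orthonormal_def
  proof (intro conjI ballI)
    fix i j assume i: "i \<in> {..<Suc n}" and j: "j \<in> {..<Suc n}"
    have "z i \<bullet> z j = z i $ 0 * z j $ 0 + (\<Sum>l<n. z i $ (Suc l) * z j $ (Suc l))"
      by (rule sp_Suc[OF zc zc])
    also have "\<dots> = (if i = j then 1 else 0)"
    proof (cases "i = 0")
      case True thus ?thesis using i j by (simp add: z0 zS)
    next
      case False
      show ?thesis
      proof (cases "j = 0")
        case True thus ?thesis using i j False by (simp add: z0 zS)
      next
        case False': False
        have jn: "j - 1 < n" using j False' by auto
        have dj: "dim_vec (ys' (j - 1)) = n" using ys'c[OF jn] by simp
        have "(\<Sum>l<n. z i $ (Suc l) * z j $ (Suc l)) = ys' (i - 1) \<bullet> ys' (j - 1)"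
          using i j False False' dj by (simp add: zS scalar_prod_def atLeast0LessThan)
        thus ?thesis using i j False False' ys'o[of "i - 1" "j - 1"] by (auto simp: z0)
      qed
    qed
    finally show "z i \<bullet> z j = (if i = j then 1 else 0)" .
  qed (rule zc)
  have zev: "G1 *\<^sub>v z k = lz k \<cdot>\<^sub>v z k" if k: "k < Suc n" for k
  proof (rule eq_vecI)
    fix i assume "i < dim_vec (lz k \<cdot>\<^sub>v z k)"
    hence i: "i < Suc n" using zc by simp
    have "(G1 *\<^sub>v z k) $ i = G1 $$ (i,0) * z k $ 0 + (\<Sum>l<n. G1 $$ (i, Suc l) * z k $ (Suc l))"
      using G1 i zc by (simp add: sp_Suc[of _ n])
    also have "\<dots> = lz k * z k $ i"
    proof (cases "k = 0")
      case True
      thus ?thesis using i by (simp add: G1col z0 zS lz_def, simp add: z_def)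
    next
      case False
      show ?thesis
      proof (cases i)
        case 0
        thus ?thesis using False by (simp add: G1row z0 zS lz_def)
      next
        case (Suc i')
        have kn: "k - 1 < n" using k False by auto
        have dk: "dim_vec (ys' (k - 1)) = n" using ys'c[OF kn] by simp
        have "(\<Sum>l<n. G1 $$ (i, Suc l) * z k $ (Suc l)) = (G' *\<^sub>v ys' (k - 1)) $ i'"
          using Suc i k False dk G'
          by (simp add: zS G'_def scalar_prod_def atLeast0LessThan)
        also have "\<dots> = lams' (k - 1) * ys' (k - 1) $ i'"
          using ys'e[OF kn] Suc i dk by simp
        finally show ?thesis using Suc i k False by (simp add: z0 lz_def z_def)
      qed
    qed
    finally show "(G1 *\<^sub>v z k) $ i = (lz k \<cdot>\<^sub>v z k) $ i" using i zc by simp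
  qed (use G1 zc in auto)
  define ys where "ys k = Q *\<^sub>v z k" for k
  have "eigsys G (Suc n) ys lz"
    unfolding eigsys_def orthonormal_def
  proof (intro conjI ballI allI impI)
    fix i assume "i \<in> {..<Suc n}" thus "ys i \<in> carrier_vec (Suc n)" unfolding ys_def using Q zc by (simp add: mult_mat_vec_carrier)
  next
    fix i j assume "i \<in> {..<Suc n}" "j \<in> {..<Suc n}"
    thus "ys i \<bullet> ys j = (if i = j then 1 else 0)"
      unfolding ys_def using orth_mult[OF Q QT QQ zc zc] zo unfolding orthonormal_def by simp
  next
    fix j assume j: "j < Suc n"
    have w: "Q *\<^sub>v z j \<in> carrier_vec (Suc n)" using Q zc by (simp add: mult_mat_vec_carrier)
    have GQ: "G * Q \<in> carrier_mat (Suc n) (Suc n)" using G Q by simp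
    have a1: "G1 *\<^sub>v z j = Q *\<^sub>v (G *\<^sub>v (Q *\<^sub>v z j))" unfolding G1_def
      using Q G zc assoc_mult_mat_vec[OF Q GQ zc] assoc_mult_mat_vec[OF G Q zc] by simp
    have a2: "Q *\<^sub>v (Q *\<^sub>v u) = u" if "u \<in> carrier_vec (Suc n)" for u
      using that Q QQ by (metis assoc_mult_mat_vec one_mult_mat_vec)
    have Gw: "G *\<^sub>v (Q *\<^sub>v z j) \<in> carrier_vec (Suc n)" using G w by (simp add: mult_mat_vec_carrier)
    have "G *\<^sub>v ys j = Q *\<^sub>v (G1 *\<^sub>v z j)" unfolding ys_def a1 a2[OF Gw] ..
    also have "\<dots> = lz j \<cdot>\<^sub>v ys j" unfolding ys_def using zev[OF j] mult_mat_vec[OF Q zc] by simp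
    finally show "G *\<^sub>v ys j = lz j \<cdot>\<^sub>v ys j" .
  qed
  thus ?case by blast
qed

lemma spectral_sorted:
  assumes G: "G \<in> carrier_mat n n" and s: "symm G n"
  shows "\<exists>ys lams. eigsys G n ys lams \<and> (\<forall>i j. i \<le> j \<longrightarrow> j < n \<longrightarrow> lams j \<le> lams i)"
proof -
  obtain ys lams where es: "eigsys G n ys lams" using spectral[OF G s] by blast
  define idx where "idx = sort_key (\<lambda>i. - lams i) [0..<n]"
  have ms: "mset idx = mset [0..<n]" unfolding idx_def by simp
  have len: "length idx = n" using arg_cong[OF ms, of size] by simp
  have set: "set idx = {..<n}" using arg_cong[OF ms, of set_mset] by auto
  have dist: "distinct idx" unfolding idx_def by simp
  have sorted: "sorted (map (\<lambda>i. - lams i) idx)" unfolding idx_def by simp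
  have inr: "i < n \<Longrightarrow> idx ! i < n" for i using set len by (metis lessThan_iff nth_mem)
  define ys' where "ys' i = ys (idx ! i)" for i
  define lams' where "lams' i = lams (idx ! i)" for i
  have "eigsys G n ys' lams'"
    using es inr unfolding eigsys_def orthonormal_def ys'_def lams'_def
    by (auto simp: nth_eq_iff_index_eq[OF dist] len)
  moreover have "\<forall>i j. i \<le> j \<longrightarrow> j < n \<longrightarrow> lams' j \<le> lams' i"
  proof (intro allI impI)
    fix i j assume "i \<le> j" "j < n"
    hence "map (\<lambda>i. - lams i) idx ! i \<le> map (\<lambda>i. - lams i) idx ! j"
      using sorted_nth_mono[OF sorted] len by auto
    thus "lams' j \<le> lams' i" unfolding lams'_def using \<open>i \<le> j\<close> \<open>j < n\<close> len by simp
  qed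
  ultimately show ?thesis by blast
qed

lemma proots_lin: "proots (\<Prod>a \<leftarrow> xs. [:- a, 1:]) = mset (xs :: real list)"
proof (induction xs)
  case (Cons a xs)
  have nz: "(\<Prod>a \<leftarrow> xs. [:- a, 1:]) \<noteq> 0" by (auto simp: prod_list_zero_iff)
  have "proots (\<Prod>a \<leftarrow> a # xs. [:- a, 1:]) = proots [:- a, 1:] + proots (\<Prod>a \<leftarrow> xs. [:- a, 1:])"
    using nz by (simp only: list.map prod_list.Cons, intro proots_mult) auto
  also have "proots [:- a, 1:] = {#a#}" using proots_linear_factor[of "- a"] by simp
  finally show ?case using Cons by simp
qed simp

lemma eig_charpoly:
  assumes G: "G \<in> carrier_mat n n" and es: "eigsys G n ys lams"
  shows "proots (char_poly G) = mset (map lams [0..<n])"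
proof -
  have on: "orthonormal {..<n} n ys" and ev: "\<And>j. j < n \<Longrightarrow> G *\<^sub>v ys j = lams j \<cdot>\<^sub>v ys j"
    using es unfolding eigsys_def by auto
  have dims: "\<And>j. j < n \<Longrightarrow> dim_vec (ys j) = n" using on unfolding orthonormal_def by auto
  define Y where "Y = mat n n (\<lambda>(l,j). ys j $ l)"
  define L where "L = mat n n (\<lambda>(i,j). if i = j then lams i else 0)"
  have Y: "Y \<in> carrier_mat n n" and L: "L \<in> carrier_mat n n" unfolding Y_def L_def by auto
  have YT: "transpose_mat Y \<in> carrier_mat n n" using Y by simp
  have colY: "j < n \<Longrightarrow> col Y j = ys j" for j unfolding Y_def using dims by (intro eq_vecI) auto
  have YtY: "transpose_mat Y * Y = 1\<^sub>m n"
  proof (rule eq_matI)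
    fix i j assume "i < dim_row (1\<^sub>m n :: real mat)" "j < dim_col (1\<^sub>m n :: real mat)"
    hence i: "i < n" and j: "j < n" by auto
    have "(transpose_mat Y * Y) $$ (i,j) = ys i \<bullet> ys j"
      using i j Y colY by simp
    thus "(transpose_mat Y * Y) $$ (i,j) = (1\<^sub>m n :: real mat) $$ (i,j)"
      using on i j unfolding orthonormal_def by simp
  qed (use Y in auto)
  have YYt: "Y * transpose_mat Y = 1\<^sub>m n" using mat_mult_left_right_inverse[OF YT Y YtY] .
  have GY: "G * Y = Y * L"
  proof (rule eq_matI)
    fix i j assume "i < dim_row (Y * L)" "j < dim_col (Y * L)"
    hence i: "i < n" and j: "j < n" using Y L by auto
    have "(G * Y) $$ (i,j) = (G *\<^sub>v ys j) $ i" using i j G Y colY by simp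
    also have "\<dots> = lams j * ys j $ i" using ev[OF j] i dims[OF j] by simp
    also have "\<dots> = (Y * L) $$ (i,j)"
    proof -
      have "(Y * L) $$ (i,j) = (\<Sum>k<n. ys k $ i * (if k = j then lams k else 0))"
        using i j unfolding Y_def L_def by (simp add: scalar_prod_def atLeast0LessThan)
      also have "\<dots> = lams j * ys j $ i" using j by (simp add: if_distrib[of "\<lambda>x. _ * x"] cong: if_cong)
      finally show ?thesis by simp
    qed
    finally show "(G * Y) $$ (i,j) = (Y * L) $$ (i,j)" .
  qed (use G Y L in auto)
  have "G = G * (Y * transpose_mat Y)" using G YYt by simp
  also have "\<dots> = (G * Y) * transpose_mat Y" using G Y YT by simp
  also have "\<dots> = Y * L * transpose_mat Y" unfolding GY ..
  finally have "similar_mat G L"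
    using similar_matI[of G L Y "transpose_mat Y" n] G Y L YT YYt YtY by auto
  hence "char_poly G = char_poly L" by (rule char_poly_similar)
  also have "\<dots> = (\<Prod>a \<leftarrow> diag_mat L. [:- a, 1:])"
    by (rule char_poly_upper_triangular[OF L]) (auto simp: upper_triangular_def L_def)
  also have "diag_mat L = map lams [0..<n]" unfolding diag_mat_def L_def by simp
  finally have cp: "char_poly G = (\<Prod>a \<leftarrow> map lams [0..<n]. [:- a, 1:])" .
  have "proots (\<Prod>a \<leftarrow> map lams [0..<n]. [:- a, 1:]) = mset (map lams [0..<n])"
    by (rule proots_lin)
  thus ?thesis using cp by simp
qed

lemma gram_form:
  fixes M :: "real mat"
  assumes M: "M \<in> carrier_mat m n" and a: "a \<in> carrier_vec n" and b: "b \<in> carrier_vec n"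
  shows "a \<bullet> ((transpose_mat M * M) *\<^sub>v b) = (M *\<^sub>v a) \<bullet> (M *\<^sub>v b)"
proof -
  have Mb: "M *\<^sub>v b \<in> carrier_vec m" using M b by simp
  have MT: "transpose_mat M \<in> carrier_mat n m" using M by simp
  have "(transpose_mat M * M) *\<^sub>v b = transpose_mat M *\<^sub>v (M *\<^sub>v b)"
    by (rule assoc_mult_mat_vec[OF MT M b])
  hence "a \<bullet> ((transpose_mat M * M) *\<^sub>v b) = (transpose_mat M *\<^sub>v (M *\<^sub>v b)) \<bullet> a"
    using a M b by (simp add: comm_scalar_prod[of a n])
  also have "\<dots> = (M *\<^sub>v b) \<bullet> (M *\<^sub>v a)" by (rule transpose_vec_mult_scalar[OF M a Mb])
  also have "\<dots> = (M *\<^sub>v a) \<bullet> (M *\<^sub>v b)" using M a b by (simp add: comm_scalar_prod[of _ m])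
  finally show ?thesis .
qed

lemma gram_carrier: "M \<in> carrier_mat m n \<Longrightarrow> transpose_mat M * M \<in> carrier_mat n n" by simp

lemma gram_symm:
  fixes M :: "real mat"
  assumes M: "M \<in> carrier_mat m n" shows "symm (transpose_mat M * M) n"
proof -
  have "transpose_mat (transpose_mat M * M) = transpose_mat M * transpose_mat (transpose_mat M)"
    by (rule transpose_mult[of _ n m]) (use M in auto)
  thus ?thesis using symm_transpose[OF gram_carrier[OF M]] by simp
qed

lemma eig_quad:
  assumes es: "eigsys G n ys lams" and j: "j < n"
  shows "ys j \<bullet> (G *\<^sub>v ys j) = lams j"
proof -
  have c: "ys j \<in> carrier_vec n" and o: "ys j \<bullet> ys j = 1" and e: "G *\<^sub>v ys j = lams j \<cdot>\<^sub>v ys j"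
    using es j unfolding eigsys_def orthonormal_def by auto
  show ?thesis unfolding e using c o by simp
qed

lemma gram_eig_nonneg:
  fixes M :: "real mat"
  assumes M: "M \<in> carrier_mat m n" and es: "eigsys (transpose_mat M * M) n ys lams" and j: "j < n"
  shows "lams j = (M *\<^sub>v ys j) \<bullet> (M *\<^sub>v ys j)" "lams j \<ge> 0"
proof -
  have c: "ys j \<in> carrier_vec n" using es j unfolding eigsys_def orthonormal_def by auto
  show 1: "lams j = (M *\<^sub>v ys j) \<bullet> (M *\<^sub>v ys j)"
    using eig_quad[OF es j] gram_form[OF M c c] by simp
  have "(M *\<^sub>v ys j) \<bullet> (M *\<^sub>v ys j) \<ge> 0"
    by (simp add: scalar_prod_def sum_nonneg)
  thus "lams j \<ge> 0" using 1 by simp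
qed

lemma singular_values_eq:
  fixes M :: "real mat"
  assumes M: "M \<in> carrier_mat m n" and es: "eigsys (transpose_mat M * M) n ys lams"
  shows "singular_values M = mset (map (\<lambda>j. sqrt (lams j)) [0..<n])"
  unfolding singular_values_def eig_charpoly[OF gram_carrier[OF M] es] by (simp add: mset_map multiset.map_comp o_def)

lemma schatten_pow:
  fixes M :: "real mat"
  assumes M: "M \<in> carrier_mat m n" and es: "eigsys (transpose_mat M * M) n ys lams" and p: "p > 0"
  shows "schatten_norm p M powr p = (\<Sum>j<n. sqrt (lams j) powr p)"
proof -
  have "\<Sum>\<^sub># (image_mset (\<lambda>s. s powr p) (singular_values M)) = (\<Sum>j<n. sqrt (lams j) powr p)"
    unfolding singular_values_eq[OF M es]
    by (simp add: sum_mset_sum_list sum_list_distinct_conv_sum_set atLeast0LessThan mset_map[symmetric] del: mset_map)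
  moreover have "(\<Sum>j<n. sqrt (lams j) powr p) \<ge> 0" by (simp add: sum_nonneg)
  ultimately show ?thesis unfolding schatten_norm_def using p by (simp add: powr_powr)
qed

lemma sigma_max_eq:
  fixes M :: "real mat"
  assumes M: "M \<in> carrier_mat m n" and es: "eigsys (transpose_mat M * M) n ys lams"
    and sorted: "\<forall>i j. i \<le> j \<longrightarrow> j < n \<longrightarrow> lams j \<le> lams i" and n: "n > 0"
  shows "sigma_max M = sqrt (lams 0)"
proof -
  have "set_mset (singular_values M) = (\<lambda>j. sqrt (lams j)) ` {..<n}"
    unfolding singular_values_eq[OF M es] by (auto simp: atLeast0LessThan)
  moreover have "Max ((\<lambda>j. sqrt (lams j)) ` {..<n}) = sqrt (lams 0)"
    by (rule Max_eqI) (use n sorted in auto)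
  ultimately show ?thesis unfolding sigma_max_def by simp
qed

lemma powr_tangent:
  fixes s t p :: real
  assumes s: "s > 0" and t: "t > 0" and p: "p \<ge> 1"
  shows "s powr p + p * s powr (p - 1) * (t - s) \<le> t powr p"
proof -
  define c where "c = p * s powr (p - 1)"
  define f where "f x = x powr p - c * x" for x :: real
  have der: "DERIV f x :> p * x powr (p - 1) - c" if "x > 0" for x
    unfolding f_def using has_real_derivative_powr[OF that, of p] that
    by (auto intro!: derivative_eq_intros)
  have "f s \<le> f t"
  proof (cases "s \<le> t")
    case True
    show ?thesis
    proof (rule DERIV_nonneg_imp_nondecreasing[OF True])
      fix x assume x: "s \<le> x" "x \<le> t"
      have "s powr (p - 1) \<le> x powr (p - 1)" using x s p by (intro powr_mono2) auto
      hence "p * x powr (p - 1) - c \<ge> 0" unfolding c_def using p by simp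
      thus "\<exists>y. DERIV f x :> y \<and> 0 \<le> y" using der[of x] x s by auto
    qed
  next
    case False
    hence ts: "t \<le> s" by simp
    have "f s \<le> f t"
    proof (rule DERIV_nonpos_imp_nonincreasing[OF ts])
      fix x assume x: "t \<le> x" "x \<le> s"
      have "x powr (p - 1) \<le> s powr (p - 1)" using x t p by (intro powr_mono2) auto
      hence "p * x powr (p - 1) - c \<le> 0" unfolding c_def using p by (simp add: mult_left_mono)
      thus "\<exists>y. DERIV f x :> y \<and> y \<le> 0" using der[of x] x t by auto
    qed
    thus ?thesis .
  qed
  thus ?thesis unfolding f_def c_def by (simp add: algebra_simps)
qed

lemma jensen_sub:
  fixes d s :: "nat \<Rightarrow> real"
  assumes fin: "finite J" and d: "\<And>j. j \<in> J \<Longrightarrow> d j \<ge> 0" and s: "\<And>j. j \<in> J \<Longrightarrow> s j > 0"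
    and D: "(\<Sum>j\<in>J. d j) \<le> 1" and p: "p \<ge> 1"
  shows "(\<Sum>j\<in>J. d j * s j) powr p \<le> (\<Sum>j\<in>J. d j * s j powr p)"
proof -
  define S where "S = (\<Sum>j\<in>J. d j * s j)"
  define D where "D = (\<Sum>j\<in>J. d j)"
  have S0: "S \<ge> 0" unfolding S_def using d s by (intro sum_nonneg) (simp add: less_imp_le)
  show ?thesis
  proof (cases "S = 0")
    case True
    thus ?thesis unfolding S_def[symmetric] using d by (simp add: sum_nonneg)
  next
    case False
    hence Sp: "S > 0" using S0 by simp
    have h1: "(\<Sum>j\<in>J. d j * (S powr p + p * S powr (p - 1) * (s j - S))) \<le> (\<Sum>j\<in>J. d j * s j powr p)"
      using powr_tangent[OF Sp s p] d by (intro sum_mono mult_left_mono) auto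
    have "(\<Sum>j\<in>J. d j * (S powr p + p * S powr (p - 1) * (s j - S)))
        = D * S powr p + p * S powr (p - 1) * ((\<Sum>j\<in>J. d j * s j) - D * S)"
      unfolding D_def
      by (simp add: algebra_simps sum.distrib sum_subtractf sum_distrib_left sum_distrib_right)
    hence h2: "(\<Sum>j\<in>J. d j * (S powr p + p * S powr (p - 1) * (s j - S)))
        = D * S powr p + p * S powr (p - 1) * (S - D * S)" unfolding S_def[symmetric] .
    have h3: "S powr (p - 1) * S = S powr p"
      using Sp by (simp add: powr_mult_base mult.commute)
    have h4: "p * S powr (p - 1) * (S - D * S) = p * (S powr (p - 1) * S) * (1 - D)"
      by (simp add: algebra_simps)
    have "D \<le> 1" using assms(4) unfolding D_def .
    have "S powr p * (D + p * (1 - D)) = D * S powr p + p * S powr (p - 1) * (S - D * S)"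
      unfolding h4 h3 by (simp add: algebra_simps)
    hence h5: "S powr p * (D + p * (1 - D)) \<le> (\<Sum>j\<in>J. d j * s j powr p)" using h1 h2 by simp
    have "D + p * (1 - D) \<ge> 1"
    proof -
      have "p * (1 - D) \<ge> 1 * (1 - D)" using p \<open>D \<le> 1\<close> by (intro mult_right_mono) auto
      thus ?thesis by simp
    qed
    moreover have "S powr p \<ge> 0" by simp
    ultimately have "S powr p \<le> (\<Sum>j\<in>J. d j * s j powr p)"
      using h5 by (smt (verit) mult_left_mono mult_cancel_left1)
    thus ?thesis unfolding S_def .
  qed
qed

lemma lemmaK:
  fixes A :: "real mat" and uf vf :: "nat \<Rightarrow> real vec"
  assumes A: "A \<in> carrier_mat m n" and es: "eigsys (transpose_mat A * A) n ys lams"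
    and fin: "finite I" and ou: "orthonormal I m uf" and ov: "orthonormal I n vf" and p: "p \<ge> 1"
  shows "(\<Sum>i\<in>I. \<bar>uf i \<bullet> (A *\<^sub>v vf i)\<bar> powr p) \<le> (\<Sum>j<n. sqrt (lams j) powr p)"
proof -
  have on: "orthonormal {..<n} n ys" using es unfolding eigsys_def by simp
  have ysc: "\<And>j. j < n \<Longrightarrow> ys j \<in> carrier_vec n" and yy: "\<And>j. j < n \<Longrightarrow> ys j \<bullet> ys j = 1"
    and yo: "\<And>j k. j < n \<Longrightarrow> k < n \<Longrightarrow> ys j \<bullet> ys k = (if j = k then 1 else 0)"
    and ev: "\<And>j. j < n \<Longrightarrow> (transpose_mat A * A) *\<^sub>v ys j = lams j \<cdot>\<^sub>v ys j"
    using es unfolding eigsys_def orthonormal_def by auto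
  have ufc: "\<And>i. i \<in> I \<Longrightarrow> uf i \<in> carrier_vec m" and uu: "\<And>i. i \<in> I \<Longrightarrow> uf i \<bullet> uf i = 1"
    using ou unfolding orthonormal_def by auto
  have vfc: "\<And>i. i \<in> I \<Longrightarrow> vf i \<in> carrier_vec n" and vv: "\<And>i. i \<in> I \<Longrightarrow> vf i \<bullet> vf i = 1"
    using ov unfolding orthonormal_def by auto
  have AT: "transpose_mat A \<in> carrier_mat n m" using A by simp
  define x where "x j = A *\<^sub>v ys j" for j
  have xc: "\<And>j. j < n \<Longrightarrow> x j \<in> carrier_vec m" unfolding x_def using A ysc by simp
  have xx: "x j \<bullet> x k = (if j = k then lams j else 0)" if j: "j < n" and k: "k < n" for j k
  proof -
    have "x j \<bullet> x k = ys j \<bullet> ((transpose_mat A * A) *\<^sub>v ys k)"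
      unfolding x_def using gram_form[OF A ysc[OF j] ysc[OF k]] by simp
    also have "\<dots> = lams k * (ys j \<bullet> ys k)" unfolding ev[OF k] using ysc[OF j] ysc[OF k] by simp
    finally show ?thesis using yo[OF j k] by simp
  qed
  have lam0: "\<And>j. j < n \<Longrightarrow> lams j \<ge> 0" using gram_eig_nonneg(2)[OF A es] by blast
  define \<beta> where "\<beta> i j = ys j \<bullet> vf i" for i j
  define \<alpha> where "\<alpha> i j = uf i \<bullet> x j" for i j
  have expand: "uf i \<bullet> (A *\<^sub>v vf i) = (\<Sum>j<n. \<beta> i j * \<alpha> i j)" if i: "i \<in> I" for i
  proof -
    have ATu: "transpose_mat A *\<^sub>v uf i \<in> carrier_vec n" using AT ufc[OF i] by simp
    have "uf i \<bullet> (A *\<^sub>v vf i) = (transpose_mat A *\<^sub>v uf i) \<bullet> vf i"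
      using transpose_vec_mult_scalar[OF A vfc[OF i] ufc[OF i]] by simp
    also have "\<dots> = (\<Sum>j<n. (ys j \<bullet> (transpose_mat A *\<^sub>v uf i)) * (ys j \<bullet> vf i))"
      by (rule parseval[OF on ATu vfc[OF i]])
    also have "\<dots> = (\<Sum>j<n. \<beta> i j * \<alpha> i j)"
    proof (intro sum.cong refl)
      fix j assume "j \<in> {..<n}"
      hence j: "j < n" by simp
      have "ys j \<bullet> (transpose_mat A *\<^sub>v uf i) = (transpose_mat A *\<^sub>v uf i) \<bullet> ys j"
        using ysc[OF j] ATu by (simp add: comm_scalar_prod[of _ n])
      also have "\<dots> = uf i \<bullet> x j" unfolding x_def
        by (rule transpose_vec_mult_scalar[OF A ysc[OF j] ufc[OF i]])
      finally show "(ys j \<bullet> (transpose_mat A *\<^sub>v uf i)) * (ys j \<bullet> vf i) = \<beta> i j * \<alpha> i j"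
        unfolding \<alpha>_def \<beta>_def by simp
    qed
    finally show ?thesis .
  qed
  have B1: "(\<Sum>i\<in>I. (\<beta> i j)^2) \<le> 1" if j: "j < n" for j
  proof -
    have "(\<Sum>i\<in>I. (vf i \<bullet> ys j)^2) \<le> ys j \<bullet> ys j" by (rule bessel[OF fin ov ysc[OF j]])
    moreover have "\<And>i. i \<in> I \<Longrightarrow> vf i \<bullet> ys j = \<beta> i j"
      unfolding \<beta>_def using vfc ysc[OF j] by (simp add: comm_scalar_prod[of _ n])
    ultimately show ?thesis using yy[OF j] by simp
  qed
  have B2: "(\<Sum>j<n. (\<beta> i j)^2) = 1" if i: "i \<in> I" for i
    using parseval[OF on vfc[OF i] vfc[OF i]] vv[OF i] unfolding \<beta>_def by (simp add: power2_eq_square)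
  have B3: "(\<Sum>i\<in>I. (\<alpha> i j)^2) \<le> lams j" if j: "j < n" for j
    using bessel[OF fin ou xc[OF j]] xx[OF j j] unfolding \<alpha>_def by simp
  define J where "J = {j. j < n \<and> lams j > 0}"
  have finJ: "finite J" unfolding J_def by simp
  have Jsub: "J \<subseteq> {..<n}" unfolding J_def by auto
  define \<sigma> where "\<sigma> j = sqrt (lams j)" for j
  have sig_pos: "\<And>j. j \<in> J \<Longrightarrow> \<sigma> j > 0" unfolding J_def \<sigma>_def by simp
  have sig_sq: "\<And>j. j \<in> J \<Longrightarrow> \<sigma> j * \<sigma> j = lams j" unfolding J_def \<sigma>_def by simp
  have B4: "(\<Sum>j\<in>J. (\<alpha> i j)^2 / lams j) \<le> 1" if i: "i \<in> I" for i
  proof -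
    define e where "e j = (1 / \<sigma> j) \<cdot>\<^sub>v x j" for j
    have oe: "orthonormal J m e" unfolding orthonormal_def
    proof (intro conjI ballI)
      fix j assume "j \<in> J" thus "e j \<in> carrier_vec m" unfolding e_def J_def using xc by simp
    next
      fix j k assume j: "j \<in> J" and k: "k \<in> J"
      have jn: "j < n" and kn: "k < n" using j k unfolding J_def by auto
      have "e j \<bullet> e k = (1 / \<sigma> j) * (1 / \<sigma> k) * (x j \<bullet> x k)"
        unfolding e_def using xc[OF jn] xc[OF kn] by simp
      thus "e j \<bullet> e k = (if j = k then 1 else 0)"
        using xx[OF jn kn] sig_sq[OF j] sig_pos[OF j] j unfolding J_def
        by (cases "j = k") (simp_all add: field_simps)
    qed
    have "(\<Sum>j\<in>J. (e j \<bullet> uf i)^2) \<le> uf i \<bullet> uf i" by (rule bessel[OF finJ oe ufc[OF i]])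
    moreover have "(e j \<bullet> uf i)^2 = (\<alpha> i j)^2 / lams j" if j: "j \<in> J" for j
    proof -
      have jn: "j < n" using j unfolding J_def by auto
      have "e j \<bullet> uf i = (1 / \<sigma> j) * (x j \<bullet> uf i)" unfolding e_def using xc[OF jn] ufc[OF i] by simp
      also have "x j \<bullet> uf i = \<alpha> i j" unfolding \<alpha>_def using xc[OF jn] ufc[OF i] by (simp add: comm_scalar_prod[of _ m])
      finally have ej: "e j \<bullet> uf i = \<alpha> i j / \<sigma> j" by simp
      show ?thesis unfolding ej sig_sq[OF j, symmetric] by (simp add: power_divide power2_eq_square)
    qed
    ultimately show ?thesis using uu[OF i] by simp
  qed
  have alpha0: "\<alpha> i j = 0" if i: "i \<in> I" and j: "j < n" and nj: "j \<notin> J" for i j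
  proof -
    have "lams j = 0" using lam0[OF j] nj j unfolding J_def by auto
    hence "(\<Sum>i\<in>I. (\<alpha> i j)^2) \<le> 0" using B3[OF j] by simp
    moreover have "(\<alpha> i j)^2 \<le> (\<Sum>i\<in>I. (\<alpha> i j)^2)" by (rule member_le_sum) (use i fin in auto)
    ultimately have "(\<alpha> i j)^2 \<le> 0" by linarith
    thus ?thesis by (auto simp: power2_eq_square mult_le_0_iff)
  qed
  have expandJ: "uf i \<bullet> (A *\<^sub>v vf i) = (\<Sum>j\<in>J. \<beta> i j * \<alpha> i j)" if i: "i \<in> I" for i
    unfolding expand[OF i] by (rule sum.mono_neutral_right) (use Jsub alpha0[OF i] in auto)
  define d where "d i j = \<bar>\<beta> i j\<bar> * \<bar>\<alpha> i j\<bar> / \<sigma> j" for i j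
  have d0: "\<And>i j. j \<in> J \<Longrightarrow> d i j \<ge> 0" unfolding d_def using sig_pos by (simp add: less_imp_le)
  have dle: "d i j \<le> ((\<beta> i j)^2 + (\<alpha> i j)^2 / lams j) / 2" if j: "j \<in> J" for i j
  proof -
    define a where "a = \<bar>\<beta> i j\<bar>"
    define b where "b = \<bar>\<alpha> i j\<bar> / \<sigma> j"
    have "0 \<le> (a - b)^2" by simp
    hence "a * b \<le> (a^2 + b^2) / 2" by (simp add: power2_diff)
    moreover have "b^2 = (\<alpha> i j)^2 / lams j" unfolding b_def using sig_sq[OF j]
      by (simp add: power_divide power2_eq_square)
    moreover have "a^2 = (\<beta> i j)^2" unfolding a_def by simp
    moreover have "d i j = a * b" unfolding d_def a_def b_def by simp
    ultimately show ?thesis by simp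
  qed
  have absle: "\<bar>uf i \<bullet> (A *\<^sub>v vf i)\<bar> \<le> (\<Sum>j\<in>J. d i j * \<sigma> j)" if i: "i \<in> I" for i
  proof -
    have "\<bar>uf i \<bullet> (A *\<^sub>v vf i)\<bar> \<le> (\<Sum>j\<in>J. \<bar>\<beta> i j * \<alpha> i j\<bar>)"
      unfolding expandJ[OF i] by (rule sum_abs)
    also have "\<dots> = (\<Sum>j\<in>J. d i j * \<sigma> j)"
      unfolding d_def by (intro sum.cong refl) (use sig_pos in \<open>fastforce simp: abs_mult\<close>)
    finally show ?thesis .
  qed
  have row: "(\<Sum>j\<in>J. d i j) \<le> 1" if i: "i \<in> I" for i
  proof -
    have "(\<Sum>j\<in>J. d i j) \<le> (\<Sum>j\<in>J. ((\<beta> i j)^2 + (\<alpha> i j)^2 / lams j) / 2)"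
      by (rule sum_mono) (rule dle)
    also have "\<dots> = ((\<Sum>j\<in>J. (\<beta> i j)^2) + (\<Sum>j\<in>J. (\<alpha> i j)^2 / lams j)) / 2"
      by (simp only: sum_divide_distrib[symmetric] sum.distrib)
    also have "(\<Sum>j\<in>J. (\<beta> i j)^2) \<le> (\<Sum>j<n. (\<beta> i j)^2)"
      by (rule sum_mono2) (use Jsub in auto)
    finally show ?thesis using B2[OF i] B4[OF i] by simp
  qed
  have col: "(\<Sum>i\<in>I. d i j) \<le> 1" if j: "j \<in> J" for j
  proof -
    have jn: "j < n" and lp: "lams j > 0" using j unfolding J_def by auto
    have "(\<Sum>i\<in>I. d i j) \<le> (\<Sum>i\<in>I. ((\<beta> i j)^2 + (\<alpha> i j)^2 / lams j) / 2)"
      by (rule sum_mono) (rule dle[OF j])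
    also have "\<dots> = ((\<Sum>i\<in>I. (\<beta> i j)^2) + (\<Sum>i\<in>I. (\<alpha> i j)^2) / lams j) / 2"
      by (simp only: sum_divide_distrib[symmetric] sum.distrib)
    also have "(\<Sum>i\<in>I. (\<alpha> i j)^2) / lams j \<le> 1" using B3[OF jn] lp by simp
    finally show ?thesis using B1[OF jn] by simp
  qed
  have "(\<Sum>i\<in>I. \<bar>uf i \<bullet> (A *\<^sub>v vf i)\<bar> powr p) \<le> (\<Sum>i\<in>I. (\<Sum>j\<in>J. d i j * \<sigma> j) powr p)"
    using absle p by (intro sum_mono powr_mono2) auto
  also have "\<dots> \<le> (\<Sum>i\<in>I. \<Sum>j\<in>J. d i j * \<sigma> j powr p)"
    by (intro sum_mono jensen_sub[OF finJ d0 sig_pos row p])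
  also have "\<dots> = (\<Sum>j\<in>J. \<sigma> j powr p * (\<Sum>i\<in>I. d i j))"
    by (subst sum.swap) (simp add: sum_distrib_left mult.commute)
  also have "\<dots> \<le> (\<Sum>j\<in>J. \<sigma> j powr p)"
    using col by (intro sum_mono) (simp add: mult_left_le)
  also have "\<dots> \<le> (\<Sum>j<n. \<sigma> j powr p)" by (rule sum_mono2) (use Jsub in auto)
  finally show ?thesis unfolding \<sigma>_def .
qed

lemma quad_expand:
  fixes G :: "real mat"
  assumes G: "G \<in> carrier_mat n n" and s: "symm G n" and es: "eigsys G n ys lams"
    and x: "x \<in> carrier_vec n"
  shows "x \<bullet> (G *\<^sub>v x) = (\<Sum>j<n. lams j * (ys j \<bullet> x)^2)"
proof -
  have on: "orthonormal {..<n} n ys" and ysc: "\<And>j. j < n \<Longrightarrow> ys j \<in> carrier_vec n"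
    and ev: "\<And>j. j < n \<Longrightarrow> G *\<^sub>v ys j = lams j \<cdot>\<^sub>v ys j"
    using es unfolding eigsys_def orthonormal_def by auto
  have GT: "transpose_mat G = G" using symm_transpose[OF G] s by simp
  have Gx: "G *\<^sub>v x \<in> carrier_vec n" using G x by simp
  have "x \<bullet> (G *\<^sub>v x) = (\<Sum>j<n. (ys j \<bullet> x) * (ys j \<bullet> (G *\<^sub>v x)))" by (rule parseval[OF on x Gx])
  also have "\<dots> = (\<Sum>j<n. lams j * (ys j \<bullet> x)^2)"
  proof (intro sum.cong refl)
    fix j assume "j \<in> {..<n}" hence j: "j < n" by simp
    have "ys j \<bullet> (G *\<^sub>v x) = (transpose_mat G *\<^sub>v ys j) \<bullet> x"
      using transpose_vec_mult_scalar[OF G x ysc[OF j]] by simp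
    also have "\<dots> = lams j * (ys j \<bullet> x)" unfolding GT ev[OF j] using ysc[OF j] x by simp
    finally show "(ys j \<bullet> x) * (ys j \<bullet> (G *\<^sub>v x)) = lams j * (ys j \<bullet> x)^2"
      by (simp add: power2_eq_square)
  qed
  finally show ?thesis .
qed

lemma lincomb_sp:
  fixes ys :: "nat \<Rightarrow> real vec" and c :: "nat \<Rightarrow> real"
  assumes ysc: "\<And>k. k < r \<Longrightarrow> ys k \<in> carrier_vec n" and q: "q \<in> carrier_vec n"
  shows "q \<bullet> vec n (\<lambda>l. \<Sum>k<r. c k * ys k $ l) = (\<Sum>k<r. c k * (q \<bullet> ys k))"
proof -
  have "q \<bullet> vec n (\<lambda>l. \<Sum>k<r. c k * ys k $ l) = (\<Sum>l<n. \<Sum>k<r. q $ l * (c k * ys k $ l))"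
    by (simp add: scalar_prod_def atLeast0LessThan sum_distrib_left)
  also have "\<dots> = (\<Sum>k<r. \<Sum>l<n. q $ l * (c k * ys k $ l))" by (rule sum.swap)
  also have "\<dots> = (\<Sum>k<r. c k * (q \<bullet> ys k))"
  proof (intro sum.cong refl)
    fix k assume "k \<in> {..<r}" hence k: "k < r" by simp
    show "(\<Sum>l<n. q $ l * (c k * ys k $ l)) = c k * (q \<bullet> ys k)"
      using ysc[OF k] by (simp add: scalar_prod_def atLeast0LessThan sum_distrib_left) (rule sum.cong, simp, simp add: mult.left_commute)
  qed
  finally show ?thesis .
qed

lemma outer_mult:
  assumes u: "u \<in> carrier_vec n" and x: "x \<in> carrier_vec n"
  shows "outer u *\<^sub>v x = (u \<bullet> x) \<cdot>\<^sub>v u"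
proof (rule eq_vecI)
  fix l assume "l < dim_vec ((u \<bullet> x) \<cdot>\<^sub>v u)"
  hence l: "l < n" using u by simp
  show "(outer u *\<^sub>v x) $ l = ((u \<bullet> x) \<cdot>\<^sub>v u) $ l"
    using u x l unfolding outer_def by (simp add: scalar_prod_def sum_distrib_left mult_ac)
qed (use u in \<open>simp add: outer_def\<close>)

lemma proj_fix:
  assumes u: "u \<in> carrier_vec n" and x: "x \<in> carrier_vec n" and ux: "u \<bullet> x = 0"
  shows "(1\<^sub>m n - outer u) *\<^sub>v x = x"
proof -
  have o: "outer u \<in> carrier_mat n n" using u unfolding outer_def by simp
  have "(1\<^sub>m n - outer u) *\<^sub>v x = 1\<^sub>m n *\<^sub>v x - outer u *\<^sub>v x"
    by (rule minus_mult_distrib_mat_vec[OF one_carrier_mat o x])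
  also have "\<dots> = x" unfolding outer_mult[OF u x] ux using x u by (intro eq_vecI) auto
  finally show ?thesis .
qed

lemma outer_carrier: "u \<in> carrier_vec n \<Longrightarrow> outer u \<in> carrier_mat n n"
  unfolding outer_def by auto

lemma proj_carrier: "u \<in> carrier_vec n \<Longrightarrow> 1\<^sub>m n - outer u \<in> carrier_mat n n"
  using outer_carrier by (metis minus_carrier_mat one_carrier_mat)

lemma interlace:
  fixes A :: "real mat" and u :: "real vec"
  assumes A: "A \<in> carrier_mat m n" and u: "u \<in> carrier_vec n" and uu: "u \<bullet> u = 1"
    and esG: "eigsys (transpose_mat A * A) n ys lams"
    and srtG: "\<forall>i j. i \<le> j \<longrightarrow> j < n \<longrightarrow> lams j \<le> lams i"
    and esH: "eigsys (transpose_mat (A * (1\<^sub>m n - outer u)) * (A * (1\<^sub>m n - outer u))) n zs mus"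
    and srtH: "\<forall>i j. i \<le> j \<longrightarrow> j < n \<longrightarrow> mus j \<le> mus i"
    and j: "Suc j < n"
  shows "lams (Suc j) \<le> mus j"
proof -
  define M where "M = A * (1\<^sub>m n - outer u)"
  have P: "1\<^sub>m n - outer u \<in> carrier_mat n n" using proj_carrier[OF u] .
  have M: "M \<in> carrier_mat m n" unfolding M_def using A P by simp
  have onG: "orthonormal {..<n} n ys" and ysc: "\<And>k. k < n \<Longrightarrow> ys k \<in> carrier_vec n"
    and yo: "\<And>i k. i < n \<Longrightarrow> k < n \<Longrightarrow> ys i \<bullet> ys k = (if i = k then 1 else 0)"
    using esG unfolding eigsys_def orthonormal_def by auto
  have onH: "orthonormal {..<n} n zs" and zsc: "\<And>k. k < n \<Longrightarrow> zs k \<in> carrier_vec n"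
    using esH unfolding eigsys_def orthonormal_def by auto
  define r where "r = Suc (Suc j)"
  have rn: "r \<le> n" unfolding r_def using j by simp
  define f where "f i = vec r (\<lambda>k. if i = 0 then u \<bullet> ys k else zs (i - 1) \<bullet> ys k)" for i
  define E where "E = mat\<^sub>r r r (\<lambda>i. if i = Suc j then 0\<^sub>v r else f i)"
  have E: "E \<in> carrier_mat r r" unfolding E_def by simp
  have "det E = 0" unfolding E_def by (rule det_row_0) (auto simp: r_def f_def)
  then obtain c where c: "c \<in> carrier_vec r" and c0: "c \<noteq> 0\<^sub>v r" and Ec: "E *\<^sub>v c = 0\<^sub>v r"
    using det_0_iff_vec_prod_zero[OF E] by blast
  have rowE: "(\<Sum>k<r. (if i = 0 then u \<bullet> ys k else zs (i - 1) \<bullet> ys k) * c $ k) = 0" if i: "i < Suc j" for i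
  proof -
    have ir: "i < r" using i unfolding r_def by simp
    have "(E *\<^sub>v c) $ i = 0" using Ec ir by simp
    moreover have "(E *\<^sub>v c) $ i = f i \<bullet> c" using ir i E unfolding E_def by (simp add: f_def)
    ultimately show ?thesis using c unfolding f_def by (simp add: scalar_prod_def atLeast0LessThan)
  qed
  define x where "x = vec n (\<lambda>l. \<Sum>k<r. c $ k * ys k $ l)"
  have xc: "x \<in> carrier_vec n" unfolding x_def by simp
  have ysc': "\<And>k. k < r \<Longrightarrow> ys k \<in> carrier_vec n" using ysc rn by simp
  have xsp: "q \<bullet> x = (\<Sum>k<r. c $ k * (q \<bullet> ys k))" if "q \<in> carrier_vec n" for q
    unfolding x_def by (rule lincomb_sp[OF ysc' that])
  have ux: "u \<bullet> x = 0" using rowE[of 0] xsp[OF u] by (simp add: mult.commute)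
  have zx: "zs i \<bullet> x = 0" if i: "i < j" for i
    using rowE[of "Suc i"] xsp[OF zsc[of i]] i j by (simp add: mult.commute)
  have yx: "ys i \<bullet> x = (if i < r then c $ i else 0)" if i: "i < n" for i
  proof -
    have "ys i \<bullet> x = (\<Sum>k<r. c $ k * (if i = k then 1 else 0))"
      unfolding xsp[OF ysc[OF i]] using yo[OF i] rn by (intro sum.cong refl) auto
    thus ?thesis by (simp add: if_distrib[of "\<lambda>t. _ * t"] cong: if_cong)
  qed
  define S where "S = (\<Sum>k<r. (c $ k)^2)"
  have Spos: "S > 0"
  proof -
    have "c \<bullet> c > 0" by (rule sp_pos[OF c c0])
    moreover have "c \<bullet> c = S" unfolding S_def using c by (simp add: scalar_prod_def atLeast0LessThan power2_eq_square)
    ultimately show ?thesis by simp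
  qed
  have xx: "x \<bullet> x = S"
  proof -
    have "x \<bullet> x = (\<Sum>k<r. c $ k * (x \<bullet> ys k))" by (rule xsp[OF xc])
    also have "\<dots> = (\<Sum>k<r. (c $ k)^2)"
    proof (intro sum.cong refl)
      fix k assume "k \<in> {..<r}" hence k: "k < r" by simp
      have kn: "k < n" using k rn by simp
      have "x \<bullet> ys k = ys k \<bullet> x" using xc ysc[OF kn] by (simp add: comm_scalar_prod[of _ n])
      thus "c $ k * (x \<bullet> ys k) = (c $ k)^2" using yx[OF kn] k by (simp add: power2_eq_square)
    qed
    finally show ?thesis unfolding S_def .
  qed
  let ?G = "transpose_mat A * A"
  let ?H = "transpose_mat M * M"
  have xGx: "x \<bullet> (?G *\<^sub>v x) \<ge> lams (Suc j) * S"
  proof -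
    have "x \<bullet> (?G *\<^sub>v x) = (\<Sum>i<n. lams i * (ys i \<bullet> x)^2)"
      by (rule quad_expand[OF gram_carrier[OF A] gram_symm[OF A] esG xc])
    also have "\<dots> = (\<Sum>i<r. lams i * (ys i \<bullet> x)^2)"
      by (rule sum.mono_neutral_right) (use rn yx in auto)
    also have "\<dots> = (\<Sum>i<r. lams i * (c $ i)^2)"
      by (intro sum.cong refl) (use rn yx in auto)
    also have "\<dots> \<ge> (\<Sum>i<r. lams (Suc j) * (c $ i)^2)"
      using srtG j unfolding r_def by (intro sum_mono mult_right_mono) auto
    finally show ?thesis unfolding S_def by (simp add: sum_distrib_left)
  qed
  have xHx: "x \<bullet> (?H *\<^sub>v x) = x \<bullet> (?G *\<^sub>v x)"
  proof -
    have "M *\<^sub>v x = A *\<^sub>v x" unfolding M_def using A P xc proj_fix[OF u xc ux] by simp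
    thus ?thesis using gram_form[OF M xc xc] gram_form[OF A xc xc] by simp
  qed
  have "x \<bullet> (?H *\<^sub>v x) \<le> mus j * S"
  proof -
    have "x \<bullet> (?H *\<^sub>v x) = (\<Sum>k<n. mus k * (zs k \<bullet> x)^2)"
      by (rule quad_expand[OF gram_carrier[OF M] gram_symm[OF M] esH[folded M_def] xc])
    also have "\<dots> \<le> (\<Sum>k<n. mus j * (zs k \<bullet> x)^2)"
    proof (rule sum_mono)
      fix k assume "k \<in> {..<n}" hence k: "k < n" by simp
      show "mus k * (zs k \<bullet> x)^2 \<le> mus j * (zs k \<bullet> x)^2"
      proof (cases "k < j")
        case True thus ?thesis using zx by simp
      next
        case False thus ?thesis using srtH k by (intro mult_right_mono) auto
      qed
    qed
    also have "\<dots> = mus j * (x \<bullet> x)"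
      using parseval[OF onH xc xc] by (simp add: sum_distrib_left power2_eq_square)
    finally show ?thesis using xx by simp
  qed
  hence "lams (Suc j) * S \<le> mus j * S" using xGx xHx by simp
  thus ?thesis using Spos by simp
qed

lemma F1:
  fixes A :: "real mat" and u :: "real vec"
  assumes A: "A \<in> carrier_mat m n" and u: "u \<in> carrier_vec n" and uu: "u \<bullet> u = 1"
    and esG: "eigsys (transpose_mat A * A) n ys lams"
    and srtG: "\<forall>i j. i \<le> j \<longrightarrow> j < n \<longrightarrow> lams j \<le> lams i"
    and n: "n > 0" and p: "p > 0"
  shows "(\<Sum>j<n. sqrt (lams j) powr p) - sqrt (lams 0) powr p
          \<le> schatten_norm p (A * (1\<^sub>m n - outer u)) powr p"
proof -
  define M where "M = A * (1\<^sub>m n - outer u)"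
  have M: "M \<in> carrier_mat m n" unfolding M_def using A proj_carrier[OF u] by simp
  obtain zs mus where esH: "eigsys (transpose_mat M * M) n zs mus"
    and srtH: "\<forall>i j. i \<le> j \<longrightarrow> j < n \<longrightarrow> mus j \<le> mus i"
    using spectral_sorted[OF gram_carrier[OF M] gram_symm[OF M]] by blast
  have il: "lams (Suc j) \<le> mus j" if "Suc j < n" for j
    by (rule interlace[OF A u uu esG srtG esH[unfolded M_def] srtH that])
  have lam0: "\<And>j. j < n \<Longrightarrow> lams j \<ge> 0" using gram_eig_nonneg(2)[OF A esG] by blast
  obtain n' where n': "n = Suc n'" using n by (cases n) auto
  define g where "g t = sqrt t powr p" for t
  have "(\<Sum>j<n. g (lams j)) = g (lams 0) + (\<Sum>j<n'. g (lams (Suc j)))"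
    unfolding n' by (rule sum.lessThan_Suc_shift)
  also have "(\<Sum>j<n'. g (lams (Suc j))) \<le> (\<Sum>j<n'. g (mus j))"
  proof (rule sum_mono)
    fix j assume "j \<in> {..<n'}" hence j: "Suc j < n" using n' by simp
    show "g (lams (Suc j)) \<le> g (mus j)" unfolding g_def
      using il[OF j] lam0[OF j] p by (intro powr_mono2) auto
  qed
  also have "(\<Sum>j<n'. g (mus j)) \<le> (\<Sum>j<n. g (mus j))"
    unfolding n' by (simp add: g_def)
  finally have "(\<Sum>j<n. g (lams j)) - g (lams 0) \<le> (\<Sum>j<n. g (mus j))" by simp
  moreover have "schatten_norm p M powr p = (\<Sum>j<n. g (mus j))"
    unfolding g_def by (rule schatten_pow[OF M esH p])
  ultimately show ?thesis unfolding g_def M_def by simp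
qed

lemma proj_apply:
  fixes v t :: "real vec"
  assumes v: "v \<in> carrier_vec n" and t: "t \<in> carrier_vec n"
  shows "(1\<^sub>m n - outer v) *\<^sub>v t = t - (v \<bullet> t) \<cdot>\<^sub>v v"
proof -
  have "(1\<^sub>m n - outer v) *\<^sub>v t = 1\<^sub>m n *\<^sub>v t - outer v *\<^sub>v t"
    by (rule minus_mult_distrib_mat_vec[OF one_carrier_mat outer_carrier[OF v] t])
  thus ?thesis using outer_mult[OF v t] t by simp
qed

lemma F2:
  fixes A :: "real mat" and w :: "real vec"
  assumes A: "A \<in> carrier_mat m n" and w: "w \<in> carrier_vec m" and ww: "w \<bullet> w = 1"
    and nz: "transpose_mat A *\<^sub>v w \<noteq> 0\<^sub>v n"
    and esG: "eigsys (transpose_mat A * A) n ys lams" and p: "p \<ge> 1"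
  shows "schatten_norm p (A * (1\<^sub>m n - outer ((1 / vnorm2 (transpose_mat A *\<^sub>v w)) \<cdot>\<^sub>v (transpose_mat A *\<^sub>v w)))) powr p
          \<le> (\<Sum>j<n. sqrt (lams j) powr p) - vnorm2 (transpose_mat A *\<^sub>v w) powr p"
proof -
  define x where "x = transpose_mat A *\<^sub>v w"
  define a where "a = vnorm2 x"
  define v where "v = (1 / a) \<cdot>\<^sub>v x"
  have xc: "x \<in> carrier_vec n" unfolding x_def using A w by simp
  have xx: "x \<bullet> x > 0" by (rule sp_pos[OF xc]) (use nz x_def in simp)
  have a: "a > 0" unfolding a_def vnorm2_def using xx by simp
  have aa: "a * a = x \<bullet> x" unfolding a_def vnorm2_def using xx by simp
  have vc: "v \<in> carrier_vec n" unfolding v_def using xc by simp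
  have xv: "x = a \<cdot>\<^sub>v v" unfolding v_def using a by (simp add: smult_smult_assoc)
  have vv: "v \<bullet> v = 1" unfolding v_def using xc a aa xx by (simp add: field_simps)
  have vx: "v \<bullet> x = a" unfolding xv using vc vv by simp
  define B where "B = A * (1\<^sub>m n - outer v)"
  have P: "1\<^sub>m n - outer v \<in> carrier_mat n n" by (rule proj_carrier[OF vc])
  have B: "B \<in> carrier_mat m n" unfolding B_def using A P by simp
  have Av: "A *\<^sub>v v \<in> carrier_vec m" using A vc by simp
  have Bt: "B *\<^sub>v t = A *\<^sub>v t - (v \<bullet> t) \<cdot>\<^sub>v (A *\<^sub>v v)" if t: "t \<in> carrier_vec n" for t
  proof -
    have "B *\<^sub>v t = A *\<^sub>v ((1\<^sub>m n - outer v) *\<^sub>v t)" unfolding B_def by (rule assoc_mult_mat_vec[OF A P t])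
    also have "\<dots> = A *\<^sub>v (t - (v \<bullet> t) \<cdot>\<^sub>v v)" unfolding proj_apply[OF vc t] ..
    also have "\<dots> = A *\<^sub>v t - A *\<^sub>v ((v \<bullet> t) \<cdot>\<^sub>v v)"
      by (rule mult_minus_distrib_mat_vec[OF A t]) (use vc in simp)
    also have "A *\<^sub>v ((v \<bullet> t) \<cdot>\<^sub>v v) = (v \<bullet> t) \<cdot>\<^sub>v (A *\<^sub>v v)" by (rule mult_mat_vec[OF A vc])
    finally show ?thesis .
  qed
  have wA: "w \<bullet> (A *\<^sub>v t) = x \<bullet> t" if t: "t \<in> carrier_vec n" for t
    unfolding x_def using transpose_vec_mult_scalar[OF A t w] by simp
  have Bv: "B *\<^sub>v v = 0\<^sub>v m" unfolding Bt[OF vc] vv using Av by simp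
  have wB: "w \<bullet> (B *\<^sub>v t) = 0" if t: "t \<in> carrier_vec n" for t
  proof -
    have "w \<bullet> (B *\<^sub>v t) = w \<bullet> (A *\<^sub>v t) - (v \<bullet> t) * (w \<bullet> (A *\<^sub>v v))"
      unfolding Bt[OF t] using w A t Av by (simp add: scalar_prod_minus_distrib)
    also have "\<dots> = x \<bullet> t - (v \<bullet> t) * (x \<bullet> v)" using wA[OF t] wA[OF vc] by simp
    also have "x \<bullet> t = a * (v \<bullet> t)" unfolding xv using vc t by simp
    also have "x \<bullet> v = a" using vx vc xc by (simp add: comm_scalar_prod[of _ n])
    finally show ?thesis by simp
  qed
  obtain ts mus where esH: "eigsys (transpose_mat B * B) n ts mus"
    using spectral[OF gram_carrier[OF B] gram_symm[OF B]] by blast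
  have tsc: "\<And>k. k < n \<Longrightarrow> ts k \<in> carrier_vec n"
    and to: "\<And>k l. k < n \<Longrightarrow> l < n \<Longrightarrow> ts k \<bullet> ts l = (if k = l then 1 else 0)"
    and evH: "\<And>k. k < n \<Longrightarrow> (transpose_mat B * B) *\<^sub>v ts k = mus k \<cdot>\<^sub>v ts k"
    using esH unfolding eigsys_def orthonormal_def by auto
  have mu0: "\<And>k. k < n \<Longrightarrow> mus k \<ge> 0" using gram_eig_nonneg(2)[OF B esH] by blast
  have BB: "(B *\<^sub>v ts k) \<bullet> (B *\<^sub>v ts l) = (if k = l then mus k else 0)" if k: "k < n" and l: "l < n" for k l
  proof -
    have "(B *\<^sub>v ts k) \<bullet> (B *\<^sub>v ts l) = ts k \<bullet> ((transpose_mat B * B) *\<^sub>v ts l)"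
      using gram_form[OF B tsc[OF k] tsc[OF l]] by simp
    also have "\<dots> = mus l * (ts k \<bullet> ts l)" unfolding evH[OF l] using tsc[OF k] tsc[OF l] by simp
    finally show ?thesis using to[OF k l] by simp
  qed
  define K where "K = {k. k < n \<and> mus k > 0}"
  have finK: "finite K" unfolding K_def by simp
  have Ksub: "K \<subseteq> {..<n}" unfolding K_def by auto
  have nK: "n \<notin> K" unfolding K_def by simp
  define \<tau> where "\<tau> k = sqrt (mus k)" for k
  have tau_pos: "\<And>k. k \<in> K \<Longrightarrow> \<tau> k > 0" unfolding K_def \<tau>_def by simp
  have tau_sq: "\<And>k. k \<in> K \<Longrightarrow> \<tau> k * \<tau> k = mus k" unfolding K_def \<tau>_def by simp
  have vt: "v \<bullet> ts k = 0" if k: "k \<in> K" for k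
  proof -
    have kn: "k < n" using k unfolding K_def by simp
    have "v \<bullet> ((transpose_mat B * B) *\<^sub>v ts k) = (B *\<^sub>v v) \<bullet> (B *\<^sub>v ts k)"
      by (rule gram_form[OF B vc tsc[OF kn]])
    also have "\<dots> = 0" unfolding Bv using B tsc[OF kn] by simp
    finally have "mus k * (v \<bullet> ts k) = 0" unfolding evH[OF kn] using vc tsc[OF kn] by simp
    thus ?thesis using k unfolding K_def by simp
  qed
  have tv: "ts k \<bullet> v = 0" if k: "k \<in> K" for k
    using vt[OF k] vc tsc k unfolding K_def by (simp add: comm_scalar_prod[of _ n])
  define I where "I = insert n K"
  define uf where "uf i = (if i = n then w else (1 / \<tau> i) \<cdot>\<^sub>v (B *\<^sub>v ts i))" for i
  define vf where "vf i = (if i = n then v else ts i)" for i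
  have finI: "finite I" unfolding I_def using finK by simp
  have ufc: "\<And>i. i \<in> I \<Longrightarrow> uf i \<in> carrier_vec m"
    unfolding uf_def I_def K_def using w B tsc by auto
  have ou: "orthonormal I m uf" unfolding orthonormal_def
  proof (intro conjI ballI)
    fix i assume "i \<in> I" thus "uf i \<in> carrier_vec m" by (rule ufc)
  next
    fix i j assume i: "i \<in> I" and j: "j \<in> I"
    have key: "uf n \<bullet> uf k = 0" if k: "k \<in> K" for k
    proof -
      have kn: "k < n" using k unfolding K_def by simp
      have "uf n \<bullet> uf k = (1 / \<tau> k) * (w \<bullet> (B *\<^sub>v ts k))"
        unfolding uf_def using kn w B tsc[OF kn] by simp
      thus ?thesis using wB[OF tsc[OF kn]] by simp
    qed
    show "uf i \<bullet> uf j = (if i = j then 1 else 0)"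
    proof (cases "i = n")
      case True
      show ?thesis
      proof (cases "j = n")
        case True thus ?thesis using \<open>i = n\<close> ww unfolding uf_def by simp
      next
        case False
        hence jK: "j \<in> K" using j unfolding I_def by simp
        thus ?thesis using key[OF jK] \<open>i = n\<close> False by simp
      qed
    next
      case False
      hence iK: "i \<in> K" using i unfolding I_def by simp
      have iN: "i < n" using iK unfolding K_def by simp
      show ?thesis
      proof (cases "j = n")
        case True
        have "uf i \<bullet> uf j = uf j \<bullet> uf i" using ufc i j by (simp add: comm_scalar_prod[of _ m])
        thus ?thesis using key[OF iK] True False by simp
      next
        case False': False
        hence jK: "j \<in> K" using j unfolding I_def by simp
        have jN: "j < n" using jK unfolding K_def by simp
        have "uf i \<bullet> uf j = (1 / \<tau> i) * (1 / \<tau> j) * ((B *\<^sub>v ts i) \<bullet> (B *\<^sub>v ts j))"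
          unfolding uf_def using False False' B tsc[OF iN] tsc[OF jN] by simp
        thus ?thesis unfolding BB[OF iN jN] using tau_sq[OF iK] tau_pos[OF iK] iK unfolding K_def
          by (cases "i = j") (simp_all add: field_simps)
      qed
    qed
  qed
  have ov: "orthonormal I n vf" unfolding orthonormal_def
  proof (intro conjI ballI)
    fix i assume "i \<in> I" thus "vf i \<in> carrier_vec n" unfolding vf_def I_def K_def using vc tsc by auto
  next
    fix i j assume i: "i \<in> I" and j: "j \<in> I"
    show "vf i \<bullet> vf j = (if i = j then 1 else 0)"
      using i j vv vt tv to nK unfolding vf_def I_def K_def by auto
  qed
  have "(\<Sum>i\<in>I. \<bar>uf i \<bullet> (A *\<^sub>v vf i)\<bar> powr p) \<le> (\<Sum>j<n. sqrt (lams j) powr p)"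
    by (rule lemmaK[OF A esG finI ou ov p])
  moreover have "(\<Sum>i\<in>I. \<bar>uf i \<bullet> (A *\<^sub>v vf i)\<bar> powr p) = a powr p + (\<Sum>k\<in>K. \<tau> k powr p)"
  proof -
    have "(\<Sum>i\<in>I. \<bar>uf i \<bullet> (A *\<^sub>v vf i)\<bar> powr p) = \<bar>uf n \<bullet> (A *\<^sub>v vf n)\<bar> powr p + (\<Sum>k\<in>K. \<bar>uf k \<bullet> (A *\<^sub>v vf k)\<bar> powr p)"
      unfolding I_def using finK nK by simp
    also have "uf n \<bullet> (A *\<^sub>v vf n) = a"
      unfolding uf_def vf_def using wA[OF vc] vx vc xc by (simp add: comm_scalar_prod[of _ n])
    also have "(\<Sum>k\<in>K. \<bar>uf k \<bullet> (A *\<^sub>v vf k)\<bar> powr p) = (\<Sum>k\<in>K. \<tau> k powr p)"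
    proof (intro sum.cong refl)
      fix k assume k: "k \<in> K"
      have kn: "k < n" using k unfolding K_def by simp
      have "B *\<^sub>v ts k = A *\<^sub>v ts k" unfolding Bt[OF tsc[OF kn]] vt[OF k]
        using A tsc[OF kn] Av by (intro eq_vecI) auto
      hence "A *\<^sub>v ts k = B *\<^sub>v ts k" by simp
      hence "uf k \<bullet> (A *\<^sub>v vf k) = (1 / \<tau> k) * ((B *\<^sub>v ts k) \<bullet> (B *\<^sub>v ts k))"
        unfolding uf_def vf_def using kn B tsc[OF kn] by simp
      also have "\<dots> = \<tau> k" unfolding BB[OF kn kn] using tau_sq[OF k] tau_pos[OF k] by (simp add: field_simps)
      finally show "\<bar>uf k \<bullet> (A *\<^sub>v vf k)\<bar> powr p = \<tau> k powr p" using tau_pos[OF k] by simp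
    qed
    finally show ?thesis using a by simp
  qed
  moreover have "(\<Sum>k\<in>K. \<tau> k powr p) = (\<Sum>k<n. \<tau> k powr p)"
    by (rule sum.mono_neutral_left) (use Ksub mu0 in \<open>force simp: K_def \<tau>_def\<close>)+
  moreover have "schatten_norm p B powr p = (\<Sum>k<n. \<tau> k powr p)"
    unfolding \<tau>_def by (rule schatten_pow[OF B esH]) (use p in simp)
  ultimately have "schatten_norm p B powr p \<le> (\<Sum>j<n. sqrt (lams j) powr p) - a powr p" by simp
  thus ?thesis unfolding B_def v_def a_def x_def .
qed

theorem lemma7p6:
  fixes A :: "real mat" and w :: "real vec" and p \<epsilon> :: real and m n :: nat
  assumes A: "A \<in> carrier_mat m n"
    and w: "w \<in> carrier_vec m" and wunit: "vnorm2 w = 1"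
    and p: "p \<ge> 1" and eps: "\<epsilon> > 0"
    and nz: "transpose_mat A *\<^sub>v w \<noteq> 0\<^sub>v n"
    and hyp: "vnorm2 (transpose_mat A *\<^sub>v w) powr p
              \<ge> (1 + \<epsilon>) * sigma_max A powr p - \<epsilon> * schatten_norm p A powr p"
  shows "let v = (1 / vnorm2 (transpose_mat A *\<^sub>v w)) \<cdot>\<^sub>v (transpose_mat A *\<^sub>v w) in
         \<forall>u \<in> carrier_vec n. vnorm2 u = 1 \<longrightarrow>
           schatten_norm p (A * (1\<^sub>m n - outer v)) powr p
             \<le> (1 + \<epsilon>) * schatten_norm p (A * (1\<^sub>m n - outer u)) powr p"
proof -
  have n: "n > 0"
  proof (rule ccontr)
    assume "\<not> n > 0"
    hence "n = 0" by simp
    moreover have "transpose_mat A *\<^sub>v w \<in> carrier_vec n" using A w by simp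
    ultimately have "transpose_mat A *\<^sub>v w = 0\<^sub>v n" using A by (intro eq_vecI) auto
    with nz show False by simp
  qed
  have ww: "w \<bullet> w = 1" using wunit unfolding vnorm2_def by simp
  obtain ys lams where esG: "eigsys (transpose_mat A * A) n ys lams"
    and srtG: "\<forall>i j. i \<le> j \<longrightarrow> j < n \<longrightarrow> lams j \<le> lams i"
    using spectral_sorted[OF gram_carrier[OF A] gram_symm[OF A]] by blast
  define S where "S = (\<Sum>j<n. sqrt (lams j) powr p)"
  define s1 where "s1 = sqrt (lams 0) powr p"
  define a where "a = vnorm2 (transpose_mat A *\<^sub>v w) powr p"
  have SA: "schatten_norm p A powr p = S" unfolding S_def by (rule schatten_pow[OF A esG]) (use p in simp)
  have sA: "sigma_max A powr p = s1" unfolding s1_def using sigma_max_eq[OF A esG srtG n] by simp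
  have hyp': "a \<ge> (1 + \<epsilon>) * s1 - \<epsilon> * S" using hyp unfolding SA sA a_def .
  have f2: "schatten_norm p (A * (1\<^sub>m n - outer ((1 / vnorm2 (transpose_mat A *\<^sub>v w)) \<cdot>\<^sub>v (transpose_mat A *\<^sub>v w)))) powr p \<le> S - a"
    unfolding S_def a_def by (rule F2[OF A w ww nz esG p])
  show ?thesis unfolding Let_def
  proof (intro ballI impI)
    fix u assume u: "u \<in> carrier_vec n" and uu: "vnorm2 u = 1"
    have uu': "u \<bullet> u = 1" using uu unfolding vnorm2_def by simp
    have f1: "S - s1 \<le> schatten_norm p (A * (1\<^sub>m n - outer u)) powr p"
      unfolding S_def s1_def by (rule F1[OF A u uu' esG srtG n]) (use p in simp)
    have "S - a \<le> (1 + \<epsilon>) * (S - s1)" using hyp' by (simp add: algebra_simps)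
    also have "\<dots> \<le> (1 + \<epsilon>) * schatten_norm p (A * (1\<^sub>m n - outer u)) powr p"
      using f1 eps by (intro mult_left_mono) auto
    finally show "schatten_norm p (A * (1\<^sub>m n - outer ((1 / vnorm2 (transpose_mat A *\<^sub>v w)) \<cdot>\<^sub>v (transpose_mat A *\<^sub>v w)))) powr p
             \<le> (1 + \<epsilon>) * schatten_norm p (A * (1\<^sub>m n - outer u)) powr p" using f2 by simp
  qed
qed


end
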